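(* Assume the setting and standing assumptions (A1), (A2) described in the context. If either $\Psi^-$ or $\Psi^+$ is initially positive and has a negative sign change, then there exists $\Delta\in\mathcal{D}$ for which the system exhibits microphase separation.
   Context: Let $n,m\ge 1$, $B\in\mathbb{Z}^{n\times m}$, $C\in\mathbb{Z}^{m\times n}$. Given bounds $0\le \Delta_j^-\le \Delta_j^+<\infty$ ($j=1,\dots,m$), let $\mathcal{D}$ be the set of diagonal matrices $\Delta=\mathrm{diag}(\Delta_1,\dots,\Delta_m)$ with $\Delta_j^-\le\Delta_j\le\Delta_j^+$ for all $j$. Let $J_2,J_4\in\mathbb{R}^{n\times n}$ be symmetric. Standing assumptions: (A1) for every $\Delta\in\mathcal{D}$, the matrix $B\Delta C$ is singular and has $n-1$ eigenvalues (counted with multiplicity) with negative real part (so $0$ is a simple eigenvalue), and there is a nonzero vector $v\ge 0$ with $v^\top B=0$; (A2) $J_2$ is indefinite, $J_4$ is negative semidefinite, and there exists $\bar\kappa$ such that $\bar\kappa^2 J_2+\bar\kappa^4 J_4$ is negative definite. For real $\kappa\ge 0$ and $\Delta\in\mathcal{D}$ set $J(\Delta,\kappa)=B\Delta C+\kappa^2 J_2+\kappa^4 J_4$ and let $\rho(\Delta,\kappa)$ be its spectral abscissa (the maximum real part of its eigenvalues). Define $\Psi^-(\kappa)=\min_{\Delta\in\mathcal{D}}\det[-J(\Delta,\kappa)]$ and $\Psi^+(\kappa)=\max_{\Delta\in\mathcal{D}}\det[-J(\Delta,\kappa)]$. A continuous function $f$ on $[0,\infty)$ is initially positive (resp. negative)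 if there is $\hat\kappa>0$ with $f>0$ (resp. $f<0$) on $(0,\hat\kappa)$; it has a negative sign change if $f(\kappa_1)>0>f(\kappa_2)$ for some $\kappa_1<\kappa_2$. For a given $\Delta\in\mathcal{D}$, the system exhibits microphase separation (MS) if there exists $\hat\kappa>0$ with $\rho(\Delta,\kappa)<0$ for all $\kappa\in(0,\hat\kappa)$, and there exist $\hat\kappa<\kappa_1<\kappa_2$ with $\rho(\Delta,\kappa_1)>0$ and $\rho(\Delta,\kappa_2)<0$. *)

theory Defs
  imports Complex_Main "Jordan_Normal_Form.Char_Poly"
begin

text \<open>Matrices are Jordan_Normal_Form matrices with explicit dimensions (carrier_mat).
  Eigenvalues of a real matrix are the complex eigenvalues of its complexification.\<close>

definition cplx_mat :: "real mat \<Rightarrow> complex mat" where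
  "cplx_mat A = map_mat complex_of_real A"

definition real_of_int_mat :: "int mat \<Rightarrow> real mat" where
  "real_of_int_mat A = map_mat real_of_int A"

definition spectral_abscissa :: "real mat \<Rightarrow> real" where
  "spectral_abscissa A = Max (Re ` {k. eigenvalue (cplx_mat A) k})"

definition num_neg_eigs :: "real mat \<Rightarrow> nat" where
  "num_neg_eigs A = (\<Sum>k\<in>{k. poly (char_poly (cplx_mat A)) k = 0 \<and> Re k < 0}.
                        order k (char_poly (cplx_mat A)))"

definition diag_set :: "nat \<Rightarrow> (nat \<Rightarrow> real) \<Rightarrow> (nat \<Rightarrow> real) \<Rightarrow> real mat set" where
  "diag_set m lo hi = {D \<in> carrier_mat m m. diagonal_mat D \<and>
                          (\<forall>j<m. lo j \<le> D $$ (j,j) \<and> D $$ (j,j) \<le> hi j)}"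

definition quad_form :: "real mat \<Rightarrow> real vec \<Rightarrow> real" where
  "quad_form A x = x \<bullet> (A *\<^sub>v x)"

definition symmetric_mat :: "real mat \<Rightarrow> bool" where
  "symmetric_mat A \<longleftrightarrow> transpose_mat A = A"

definition indefinite_mat :: "nat \<Rightarrow> real mat \<Rightarrow> bool" where
  "indefinite_mat n A \<longleftrightarrow> (\<exists>x\<in>carrier_vec n. quad_form A x > 0) \<and> (\<exists>y\<in>carrier_vec n. quad_form A y < 0)"

definition neg_semidef_mat :: "nat \<Rightarrow> real mat \<Rightarrow> bool" where
  "neg_semidef_mat n A \<longleftrightarrow> (\<forall>x\<in>carrier_vec n. quad_form A x \<le> 0)"

definition neg_def_mat :: "nat \<Rightarrow> real mat \<Rightarrow> bool" where
  "neg_def_mat n A \<longleftrightarrow> (\<forall>x\<in>carrier_vec n. x \<noteq> 0\<^sub>v n \<longrightarrow> quad_form A x < 0)"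

definition Jmat :: "int mat \<Rightarrow> int mat \<Rightarrow> real mat \<Rightarrow> real mat \<Rightarrow> real mat \<Rightarrow> real \<Rightarrow> real mat" where
  "Jmat B C J2 J4 D \<kappa> = real_of_int_mat B * D * real_of_int_mat C + (\<kappa>^2) \<cdot>\<^sub>m J2 + (\<kappa>^4) \<cdot>\<^sub>m J4"

definition initially_positive :: "(real \<Rightarrow> real) \<Rightarrow> bool" where
  "initially_positive f \<longleftrightarrow> (\<exists>k0>0. \<forall>\<kappa>. 0 < \<kappa> \<and> \<kappa> < k0 \<longrightarrow> f \<kappa> > 0)"

definition neg_sign_change :: "(real \<Rightarrow> real) \<Rightarrow> bool" where
  "neg_sign_change f \<longleftrightarrow> (\<exists>\<kappa>1 \<kappa>2. 0 \<le> \<kappa>1 \<and> \<kappa>1 < \<kappa>2 \<and> f \<kappa>1 > 0 \<and> f \<kappa>2 < 0)"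

definition microphase_sep :: "(real \<Rightarrow> real) \<Rightarrow> bool" where
  "microphase_sep rho \<longleftrightarrow> (\<exists>k0>0. (\<forall>\<kappa>. 0 < \<kappa> \<and> \<kappa> < k0 \<longrightarrow> rho \<kappa> < 0) \<and>
      (\<exists>\<kappa>1 \<kappa>2. k0 < \<kappa>1 \<and> \<kappa>1 < \<kappa>2 \<and> rho \<kappa>1 > 0 \<and> rho \<kappa>2 < 0))"

end

theory Submission
  imports Defs
begin

lemma poly_sum_le:
  fixes p :: "'a::comm_semiring_1 poly"
  assumes "degree p \<le> n"
  shows "poly p z = (\<Sum>i\<le>n. coeff p i * z ^ i)"
proof -
  have "poly p z = (\<Sum>i\<le>degree p. coeff p i * z ^ i)" by (rule poly_altdef)
  also have "\<dots> = (\<Sum>i\<le>n. coeff p i * z ^ i)"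
    by (rule sum.mono_neutral_left, insert assms, auto simp: coeff_eq_0)
  finally show ?thesis .
qed

lemma poly_of_real_sum:
  assumes "degree p \<le> n"
  shows "poly (map_poly complex_of_real p) z = (\<Sum>i\<le>n. of_real (coeff p i) * z ^ i)"
proof -
  have "degree (map_poly complex_of_real p) \<le> n" using assms by simp
  from poly_sum_le[OF this] show ?thesis by simp
qed

lemma bw_real:
  fixes f :: "nat \<Rightarrow> real"
  assumes "\<And>k. \<bar>f k\<bar> \<le> B"
  shows "\<exists>r l. strict_mono r \<and> (f \<circ> r) \<longlonglongrightarrow> l"
proof -
  obtain r where r: "strict_mono r" "monoseq (\<lambda>n. f (r n))" using seq_monosub by blast
  have "Bseq (\<lambda>n. f (r n))" using assms by (intro BseqI'[of _ B]) auto
  hence "convergent (\<lambda>n. f (r n))" using r(2) Bseq_monoseq_convergent by blast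
  then obtain l where "(\<lambda>n. f (r n)) \<longlonglongrightarrow> l" unfolding convergent_def by blast
  thus ?thesis using r(1) by (auto simp: o_def)
qed

lemma bw_complex:
  fixes f :: "nat \<Rightarrow> complex"
  assumes "\<And>k. norm (f k) \<le> B"
  shows "\<exists>r l. strict_mono r \<and> (f \<circ> r) \<longlonglongrightarrow> l"
proof -
  have "\<bar>Re (f k)\<bar> \<le> B" for k using assms[of k] abs_Re_le_cmod order_trans by blast
  from bw_real[of "\<lambda>k. Re (f k)", OF this] obtain r a where r: "strict_mono r"
    "(\<lambda>k. Re (f (r k))) \<longlonglongrightarrow> a" by (auto simp: o_def)
  have "\<bar>Im (f (r k))\<bar> \<le> B" for k using assms[of "r k"] abs_Im_le_cmod order_trans by blast
  from bw_real[of "\<lambda>k. Im (f (r k))", OF this] obtain s b where s: "strict_mono s"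
    "(\<lambda>k. Im (f (r (s k)))) \<longlonglongrightarrow> b" by (auto simp: o_def)
  have "(\<lambda>k. Re (f (r (s k)))) \<longlonglongrightarrow> a"
    using LIMSEQ_subseq_LIMSEQ[OF r(2) s(1)] by (simp add: o_def)
  from tendsto_Complex[OF this s(2)] have "(\<lambda>k. f (r (s k))) \<longlonglongrightarrow> Complex a b" by simp
  moreover have "strict_mono (r \<circ> s)" using r(1) s(1) by (rule strict_mono_o)
  ultimately show ?thesis by (auto simp: o_def)
qed

lemma bw_vec:
  fixes g :: "nat \<Rightarrow> nat \<Rightarrow> real"
  assumes "\<And>k i. \<bar>g k i\<bar> \<le> B"
  shows "\<exists>r l. strict_mono r \<and> (\<forall>i<n. (\<lambda>k. g (r k) i) \<longlonglongrightarrow> l i)"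
proof (induction n)
  case 0
  show ?case by (rule exI[of _ id], auto simp: strict_mono_def)
next
  case (Suc n)
  then obtain r l where r: "strict_mono r" "\<forall>i<n. (\<lambda>k. g (r k) i) \<longlonglongrightarrow> l i" by blast
  from bw_real[of "\<lambda>k. g (r k) n", OF assms] obtain s L where s: "strict_mono s"
    "(\<lambda>k. g (r (s k)) n) \<longlonglongrightarrow> L" by (auto simp: o_def)
  have "\<forall>i<Suc n. (\<lambda>k. g (r (s k)) i) \<longlonglongrightarrow> (l(n:=L)) i"
  proof (intro allI impI)
    fix i assume "i < Suc n"
    show "(\<lambda>k. g (r (s k)) i) \<longlonglongrightarrow> (l(n:=L)) i"
    proof (cases "i = n")
      case True thus ?thesis using s(2) by simp
    next
      case False
      hence "i < n" using \<open>i < Suc n\<close> by simp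
      thus ?thesis using LIMSEQ_subseq_LIMSEQ[OF r(2)[rule_format, OF \<open>i<n\<close>] s(1)] False
        by (simp add: o_def)
    qed
  qed
  moreover have "strict_mono (r \<circ> s)" using r(1) s(1) by (rule strict_mono_o)
  ultimately show ?case unfolding o_def by blast
qed

lemma root_bound:
  fixes c :: "nat \<Rightarrow> real" and z :: complex
  assumes n: "n \<ge> 1" and cn: "c n = 1"
    and root: "(\<Sum>i\<le>n. of_real (c i) * z ^ i) = 0"
  shows "norm z \<le> 1 + (\<Sum>i<n. \<bar>c i\<bar>)"
proof (cases "norm z \<le> 1")
  case True thus ?thesis by (smt (verit) sum_nonneg abs_ge_zero)
next
  case False
  hence z1: "norm z > 1" by simp
  have "(\<Sum>i\<le>n. of_real (c i) * z ^ i) = (\<Sum>i<n. of_real (c i) * z ^ i) + z ^ n"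
    using cn by (simp add: lessThan_Suc_atMost[symmetric])
  with root have "z ^ n = - (\<Sum>i<n. of_real (c i) * z ^ i)" by (simp add: eq_neg_iff_add_eq_0 add.commute)
  hence "norm z ^ n = norm (\<Sum>i<n. of_real (c i) * z ^ i)" by (metis norm_minus_cancel norm_power)
  also have "\<dots> \<le> (\<Sum>i<n. \<bar>c i\<bar> * norm z ^ i)"
    by (rule order_trans[OF norm_sum], simp add: norm_mult norm_power)
  also have "\<dots> \<le> (\<Sum>i<n. \<bar>c i\<bar> * norm z ^ (n - 1))"
    by (rule sum_mono, rule mult_left_mono, rule power_increasing, insert z1, auto)
  also have "\<dots> = (\<Sum>i<n. \<bar>c i\<bar>) * norm z ^ (n - 1)" by (simp add: sum_distrib_right)
  finally have le: "norm z ^ n \<le> (\<Sum>i<n. \<bar>c i\<bar>) * norm z ^ (n - 1)" .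
  have "norm z ^ n = norm z * norm z ^ (n - 1)" using n by (cases n, auto)
  with le have "norm z * norm z ^ (n - 1) \<le> (\<Sum>i<n. \<bar>c i\<bar>) * norm z ^ (n - 1)" by simp
  moreover have "norm z ^ (n - 1) > 0" using z1 by (intro zero_less_power) linarith
  ultimately have "norm z \<le> (\<Sum>i<n. \<bar>c i\<bar>)" by simp
  thus ?thesis by simp
qed


lemma small_kappa:
  fixes P :: "real \<Rightarrow> real poly" and n :: nat and e :: real
  assumes n: "n \<ge> 1"
  and deg: "\<And>\<kappa>. degree (P \<kappa>) \<le> n" and monic: "\<And>\<kappa>. coeff (P \<kappa>) n = 1"
  and cont: "\<And>i. isCont (\<lambda>\<kappa>. coeff (P \<kappa>) i) 0"
  and h0: "\<And>z::complex. poly (map_poly of_real (P 0)) z = 0 \<Longrightarrow> Re z \<ge> 0 \<Longrightarrow> z = 0"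
  and h1: "coeff (P 0) 1 > 0"
  and e: "e > 0" and h2: "\<And>\<kappa>. 0<\<kappa> \<Longrightarrow> \<kappa><e \<Longrightarrow> coeff (P \<kappa>) 0 > 0"
  shows "\<exists>\<epsilon>>0. \<forall>\<kappa>. 0<\<kappa> \<and> \<kappa><\<epsilon> \<longrightarrow> (\<forall>z. poly (map_poly of_real (P \<kappa>)) z = 0 \<longrightarrow> Re z < 0)"
proof (rule ccontr)
  define c where "c i \<kappa> = coeff (P \<kappa>) i" for i \<kappa>
  define E where "E \<kappa> z = (\<Sum>i\<le>n. complex_of_real (c i \<kappa>) * z^i)" for \<kappa> z
  define G where "G \<kappa> z = (\<Sum>i<n. complex_of_real (c (Suc i) \<kappa>) * z^i)" for \<kappa> z
  have PE: "poly (map_poly of_real (P \<kappa>)) z = E \<kappa> z" for \<kappa> z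
    unfolding E_def c_def by (rule poly_of_real_sum[OF deg])
  obtain n' where n': "n = Suc n'" using n by (cases n, auto)
  have EG: "E \<kappa> z = of_real (c 0 \<kappa>) + z * G \<kappa> z" for \<kappa> z
  proof -
    have "E \<kappa> z = of_real (c 0 \<kappa>) + (\<Sum>i\<le>n'. complex_of_real (c (Suc i) \<kappa>) * z^(Suc i))"
      unfolding E_def n' sum.atMost_Suc_shift by simp
    also have "(\<Sum>i\<le>n'. complex_of_real (c (Suc i) \<kappa>) * z^(Suc i)) = z * G \<kappa> z"
      unfolding G_def n' lessThan_Suc_atMost sum_distrib_left
      by (rule sum.cong, auto simp: ac_simps)
    finally show ?thesis .
  qed
  assume neg: "\<not> ?thesis"
  have "\<exists>\<kappa> z. 0<\<kappa> \<and> \<kappa> < min e (inverse (real (Suc k))) \<and> E \<kappa> z = 0 \<and> Re z \<ge> 0" for k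
  proof -
    have "min e (inverse (real (Suc k))) > 0" using e by simp
    with neg obtain \<kappa> z where "0<\<kappa>" "\<kappa> < min e (inverse (real (Suc k)))"
      "poly (map_poly of_real (P \<kappa>)) z = 0" "\<not> Re z < 0" by blast
    thus ?thesis unfolding PE by (intro exI[of _ \<kappa>] exI[of _ z]) auto
  qed
  then obtain K Z where KZ: "\<And>k. 0 < K k \<and> K k < min e (inverse (real (Suc k))) \<and> E (K k) (Z k) = 0 \<and> Re (Z k) \<ge> 0"
    by metis
  have K0: "K \<longlonglongrightarrow> 0"
    by (rule real_tendsto_sandwich[of "\<lambda>_. 0" _ _ "\<lambda>k. inverse (real (Suc k))"],
        insert KZ LIMSEQ_inverse_real_of_nat, auto intro!: always_eventually less_imp_le)
  have cK: "(\<lambda>k. c i (K k)) \<longlonglongrightarrow> c i 0" for i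
    using isCont_tendsto_compose[OF cont K0] unfolding c_def .
  have "(\<lambda>k. \<Sum>i<n. \<bar>c i (K k)\<bar>) \<longlonglongrightarrow> (\<Sum>i<n. \<bar>c i 0\<bar>)"
    by (intro tendsto_intros cK)
  hence "Bseq (\<lambda>k. \<Sum>i<n. \<bar>c i (K k)\<bar>)" by (intro convergent_imp_Bseq) (auto simp: convergent_def)
  then obtain Bd where Bd: "\<And>k. norm (\<Sum>i<n. \<bar>c i (K k)\<bar>) \<le> Bd" by (auto simp: Bseq_def)
  have "norm (Z k) \<le> 1 + Bd" for k
  proof -
    have "norm (Z k) \<le> 1 + (\<Sum>i<n. \<bar>c i (K k)\<bar>)"
      by (rule root_bound[OF n], insert KZ[of k] monic, auto simp: c_def E_def)
    also have "\<dots> \<le> 1 + Bd" using Bd[of k] by simp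
    finally show ?thesis .
  qed
  from bw_complex[of Z, OF this] obtain r zs where r: "strict_mono r" "(\<lambda>k. Z (r k)) \<longlonglongrightarrow> zs"
    by (auto simp: o_def)
  have cKr: "(\<lambda>k. c i (K (r k))) \<longlonglongrightarrow> c i 0" for i
    using LIMSEQ_subseq_LIMSEQ[OF cK r(1)] by (simp add: o_def)
  have "Re zs \<ge> 0"
    by (rule LIMSEQ_le_const[OF tendsto_Re[OF r(2)]], insert KZ, auto)
  moreover have "E 0 zs = 0"
  proof -
    have "(\<lambda>k. E (K (r k)) (Z (r k))) \<longlonglongrightarrow> E 0 zs"
      unfolding E_def by (intro tendsto_intros cKr r(2))
    moreover have "(\<lambda>k. E (K (r k)) (Z (r k))) = (\<lambda>k. 0)" using KZ by auto
    ultimately show ?thesis using LIMSEQ_unique tendsto_const by metis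
  qed
  ultimately have zs0: "zs = 0" using h0 PE by metis
  have "(\<lambda>k. G (K (r k)) (Z (r k))) \<longlonglongrightarrow> G 0 zs"
    unfolding G_def by (intro tendsto_intros cKr r(2))
  also have "G 0 zs = of_real (c 1 0)"
  proof -
    have "G 0 zs = (\<Sum>i<n. if i = 0 then complex_of_real (c 1 0) else 0)"
      unfolding G_def zs0 by (rule sum.cong, auto)
    also have "\<dots> = of_real (c 1 0)" using n by simp
    finally show ?thesis .
  qed
  finally have "(\<lambda>k. Re (G (K (r k)) (Z (r k)))) \<longlonglongrightarrow> c 1 0"
    using tendsto_Re by fastforce
  moreover have "c 1 0 > 0" using h1 by (simp add: c_def)
  ultimately have "eventually (\<lambda>k. 0 < Re (G (K (r k)) (Z (r k)))) sequentially"
    using order_tendstoD(1) by blast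
  then obtain N where N: "0 < Re (G (K (r N)) (Z (r N)))" by (auto simp: eventually_sequentially)
  define \<kappa> where "\<kappa> = K (r N)"
  define z where "z = Z (r N)"
  define g where "g = G \<kappa> z"
  have gpos: "Re g > 0" using N unfolding g_def \<kappa>_def z_def .
  have c0: "c 0 \<kappa> > 0" using h2 KZ[of "r N"] unfolding \<kappa>_def c_def by auto
  have "E \<kappa> z = 0" using KZ unfolding \<kappa>_def z_def by auto
  hence zg: "z * g = - of_real (c 0 \<kappa>)" unfolding EG g_def by (simp add: eq_neg_iff_add_eq_0 add.commute)
  have "Re (z * g * cnj g) = Re z * (Re g * Re g + Im g * Im g)"
    by (simp add: cmod_power2 algebra_simps power2_eq_square)
  also have "Re (z * g * cnj g) = - c 0 \<kappa> * Re g" unfolding zg by simp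
  finally have "Re z * (Re g * Re g + Im g * Im g) = - c 0 \<kappa> * Re g" by simp
  moreover have "Re z * (Re g * Re g + Im g * Im g) \<ge> 0" using KZ unfolding z_def by simp
  moreover have "- c 0 \<kappa> * Re g < 0" using c0 gpos by (simp add: mult_pos_pos)
  ultimately show False by linarith
qed


definition Qf :: "nat \<Rightarrow> (nat \<Rightarrow> nat \<Rightarrow> real) \<Rightarrow> (nat \<Rightarrow> real) \<Rightarrow> real" where
  "Qf n a f = (\<Sum>i<n. \<Sum>j<n. a i j * f i * f j)"

lemma Qf_scale: "Qf n a (\<lambda>i. t * f i) = t^2 * Qf n a f"
  unfolding Qf_def by (simp add: sum_distrib_left power2_eq_square algebra_simps)

lemma Qf_cong: "(\<And>i. i < n \<Longrightarrow> f i = g i) \<Longrightarrow> Qf n a f = Qf n a g"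
  unfolding Qf_def by (intro sum.cong refl) auto

lemma unif_negdef:
  assumes nd: "\<And>f. (\<exists>i<n. f i \<noteq> 0) \<Longrightarrow> Qf n a f < 0"
  shows "\<exists>c>0. \<forall>f. Qf n a f \<le> - c * (\<Sum>i<n. (f i)^2)"
proof (rule ccontr)
  assume neg: "\<not> ?thesis"
  have "\<exists>g. (\<forall>i. \<bar>g i\<bar> \<le> 1) \<and> (\<Sum>i<n. (g i)^2) = 1 \<and> Qf n a g > - inverse (real (Suc k))" for k
  proof -
    have "inverse (real (Suc k)) > 0" by simp
    with neg obtain f where f: "Qf n a f > - inverse (real (Suc k)) * (\<Sum>i<n. (f i)^2)"
      by (meson not_le)
    define s where "s = (\<Sum>i<n. (f i)^2)"
    have s0: "s \<ge> 0" unfolding s_def by (simp add: sum_nonneg)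
    have "s \<noteq> 0"
    proof
      assume "s = 0"
      hence "\<forall>i<n. (f i)^2 = 0" unfolding s_def using sum_nonneg_eq_0_iff[of "{..<n}" "\<lambda>i. (f i)^2"] by simp
      hence "Qf n a f = 0" unfolding Qf_def by simp
      with f \<open>s = 0\<close> show False unfolding s_def by simp
    qed
    with s0 have spos: "s > 0" by simp
    define g where "g i = (if i < n then inverse (sqrt s) * f i else 0)" for i
    have Qg: "Qf n a g = inverse s * Qf n a f"
    proof -
      have "Qf n a g = Qf n a (\<lambda>i. inverse (sqrt s) * f i)" by (rule Qf_cong, simp add: g_def)
      also have "\<dots> = inverse s * Qf n a f" unfolding Qf_scale using spos
        by (simp add: power_inverse)
      finally show ?thesis .
    qed
    have sg: "(\<Sum>i<n. (g i)^2) = 1"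
    proof -
      have "(\<Sum>i<n. (g i)^2) = (\<Sum>i<n. inverse s * (f i)^2)"
        by (rule sum.cong, insert spos, auto simp: g_def power_mult_distrib power_inverse)
      also have "\<dots> = 1" using spos unfolding sum_distrib_left[symmetric] s_def[symmetric] by simp
      finally show ?thesis .
    qed
    have bd: "\<bar>g i\<bar> \<le> 1" for i
    proof (cases "i < n")
      case True
      have "(g i)^2 \<le> (\<Sum>i<n. (g i)^2)"
        by (rule member_le_sum, insert True, auto)
      hence "(g i)^2 \<le> 1" using sg by simp
      thus ?thesis by (simp add: abs_square_le_1)
    qed (simp add: g_def)
    have "Qf n a g > - inverse (real (Suc k))"
    proof -
      have "inverse s * Qf n a f > inverse s * (- inverse (real (Suc k)) * s)"
        using f spos unfolding s_def[symmetric] by (intro mult_strict_left_mono) auto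
      moreover have "inverse s * (- inverse (real (Suc k)) * s) = - inverse (real (Suc k))"
        using spos by (simp add: field_simps)
      ultimately show ?thesis unfolding Qg by linarith
    qed
    with bd sg show ?thesis by blast
  qed
  then obtain g where g: "\<And>k. (\<forall>i. \<bar>g k i\<bar> \<le> 1) \<and> (\<Sum>i<n. (g k i)^2) = 1 \<and> Qf n a (g k) > - inverse (real (Suc k))"
    by metis
  from bw_vec[of g 1 n] g obtain r l where r: "strict_mono r" "\<forall>i<n. (\<lambda>k. g (r k) i) \<longlonglongrightarrow> l i"
    by blast
  have "(\<lambda>k. \<Sum>i<n. (g (r k) i)^2) \<longlonglongrightarrow> (\<Sum>i<n. (l i)^2)"
    by (intro tendsto_intros, insert r(2), auto)
  moreover have "(\<lambda>k. \<Sum>i<n. (g (r k) i)^2) = (\<lambda>k. 1)" using g by auto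
  ultimately have sl: "(\<Sum>i<n. (l i)^2) = 1" using LIMSEQ_unique tendsto_const by metis
  have "(\<lambda>k. Qf n a (g (r k))) \<longlonglongrightarrow> Qf n a l"
    unfolding Qf_def by (intro tendsto_intros, insert r(2), auto)
  moreover have "(\<lambda>k. - inverse (real (Suc (r k)))) \<longlonglongrightarrow> - 0"
    using tendsto_minus[OF LIMSEQ_subseq_LIMSEQ[OF LIMSEQ_inverse_real_of_nat r(1)]] by (simp add: o_def)
  ultimately have "- 0 \<le> Qf n a l"
    by (rule tendsto_le[OF trivial_limit_sequentially], insert g, auto intro!: always_eventually less_imp_le)
  hence "Qf n a l \<ge> 0" by simp
  moreover have "\<exists>i<n. l i \<noteq> 0"
  proof (rule ccontr)
    assume "\<not> ?thesis"
    hence "(\<Sum>i<n. (l i)^2) = 0" by simp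
    with sl show False by simp
  qed
  ultimately show False using nd by force
qed


lemma quad_form_Qf:
  assumes A: "A \<in> carrier_mat n n"
  shows "quad_form A (vec n f) = Qf n (\<lambda>i j. A $$ (i,j)) f"
proof -
  have "quad_form A (vec n f) = (\<Sum>i<n. f i * (\<Sum>j<n. A $$ (i,j) * f j))"
  proof -
    have d: "dim_vec (A *\<^sub>v vec n f) = n" using A by simp
    have "quad_form A (vec n f) = (\<Sum>i\<in>{0..<n}. vec n f $ i * (A *\<^sub>v vec n f) $ i)"
      unfolding quad_form_def scalar_prod_def d ..
    also have "\<dots> = (\<Sum>i<n. f i * (\<Sum>j<n. A $$ (i,j) * f j))"
      unfolding atLeast0LessThan
    proof (intro sum.cong refl)
      fix i assume i: "i \<in> {..<n}"
      have "(A *\<^sub>v vec n f) $ i = row A i \<bullet> vec n f" using i A by simp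
      also have "\<dots> = (\<Sum>j\<in>{0..<n}. row A i $ j * vec n f $ j)" unfolding scalar_prod_def by simp
      also have "\<dots> = (\<Sum>j<n. A $$ (i,j) * f j)" unfolding atLeast0LessThan
        using i A by (intro sum.cong refl) simp
      finally show "vec n f $ i * (A *\<^sub>v vec n f) $ i = f i * (\<Sum>j<n. A $$ (i,j) * f j)"
        using i by simp
    qed
    finally show ?thesis .
  qed
  also have "\<dots> = Qf n (\<lambda>i j. A $$ (i,j)) f"
    unfolding Qf_def by (auto simp: sum_distrib_left intro!: sum.cong)
  finally show ?thesis .
qed

lemma neg_def_Qf:
  assumes A: "A \<in> carrier_mat n n" and nd: "neg_def_mat n A" and f: "\<exists>i<n. f i \<noteq> 0"
  shows "Qf n (\<lambda>i j. A $$ (i,j)) f < 0"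
proof -
  have "vec n f \<noteq> 0\<^sub>v n" using f by (auto simp: vec_eq_iff)
  with nd have "quad_form A (vec n f) < 0" unfolding neg_def_mat_def by auto
  thus ?thesis unfolding quad_form_Qf[OF A] .
qed

lemma neg_semidef_Qf:
  assumes A: "A \<in> carrier_mat n n" and nd: "neg_semidef_mat n A"
  shows "Qf n (\<lambda>i j. A $$ (i,j)) f \<le> 0"
proof -
  have "quad_form A (vec n f) \<le> 0" using nd unfolding neg_semidef_mat_def by auto
  thus ?thesis unfolding quad_form_Qf[OF A] .
qed

lemma Re_term: "Re (cnj w * (complex_of_real a * u)) = a * (Re w * Re u + Im w * Im u)"
  by (simp add: algebra_simps)

lemma Re_term2: "Re (cnj w * (z * w)) = Re z * ((Re w)^2 + (Im w)^2)"
  by (simp add: algebra_simps power2_eq_square)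

lemma Re_bilin:
  fixes v :: "nat \<Rightarrow> complex"
  shows "Re (\<Sum>i<n. cnj (v i) * (\<Sum>j<n. of_real (a i j) * v j)) =
    Qf n a (\<lambda>i. Re (v i)) + Qf n a (\<lambda>i. Im (v i))"
proof -
  have "Re (\<Sum>i<n. cnj (v i) * (\<Sum>j<n. of_real (a i j) * v j)) =
     (\<Sum>i<n. \<Sum>j<n. Re (cnj (v i) * (of_real (a i j) * v j)))"
    unfolding sum_distrib_left Re_sum ..
  also have "\<dots> = (\<Sum>i<n. \<Sum>j<n. a i j * Re (v i) * Re (v j) + a i j * Im (v i) * Im (v j))"
    unfolding Re_term by (simp add: distrib_left mult.assoc)
  also have "\<dots> = Qf n a (\<lambda>i. Re (v i)) + Qf n a (\<lambda>i. Im (v i))"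
    unfolding Qf_def sum.distrib ..
  finally show ?thesis .
qed

lemma Re_diag:
  fixes v :: "nat \<Rightarrow> complex"
  shows "Re (\<Sum>i<n. cnj (v i) * (z * v i)) = Re z * (\<Sum>i<n. (Re (v i))^2 + (Im (v i))^2)"
  unfolding Re_sum Re_term2 sum_distrib_left ..

lemma eig_re:
  assumes A: "A \<in> carrier_mat n n" and ev: "eigenvalue (cplx_mat A) z"
  shows "\<exists>x y. (\<exists>i<n. x i \<noteq> 0 \<or> y i \<noteq> 0) \<and>
     Re z * (\<Sum>i<n. (x i)^2 + (y i)^2) = Qf n (\<lambda>i j. A $$ (i,j)) x + Qf n (\<lambda>i j. A $$ (i,j)) y"
proof -
  have cA: "cplx_mat A \<in> carrier_mat n n" using A by (simp add: cplx_mat_def)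
  from ev obtain v where v: "v \<in> carrier_vec n" "v \<noteq> 0\<^sub>v n" "cplx_mat A *\<^sub>v v = z \<cdot>\<^sub>v v"
    unfolding eigenvalue_def eigenvector_def using cA by auto
  define x where "x i = Re (v $ i)" for i
  define y where "y i = Im (v $ i)" for i
  have row: "(\<Sum>j<n. of_real (A $$ (i,j)) * v $ j) = z * v $ i" if i: "i < n" for i
  proof -
    have "(cplx_mat A *\<^sub>v v) $ i = (z \<cdot>\<^sub>v v) $ i" by (simp only: v(3))
    also have "(z \<cdot>\<^sub>v v) $ i = z * v $ i" using i v(1) by simp
    also have "(cplx_mat A *\<^sub>v v) $ i = (\<Sum>j\<in>{0..<n}. row (cplx_mat A) i $ j * v $ j)"
      using i cA v(1) by (simp add: scalar_prod_def)
    also have "\<dots> = (\<Sum>j<n. of_real (A $$ (i,j)) * v $ j)"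
      unfolding atLeast0LessThan using i cA A by (intro sum.cong refl) (simp add: cplx_mat_def)
    finally show ?thesis by simp
  qed
  have "(\<Sum>i<n. cnj (v $ i) * (\<Sum>j<n. of_real (A $$ (i,j)) * v $ j)) = (\<Sum>i<n. cnj (v $ i) * (z * v $ i))"
    using row by (intro sum.cong) auto
  hence e1: "Re (\<Sum>i<n. cnj (v $ i) * (\<Sum>j<n. of_real (A $$ (i,j)) * v $ j)) = Re (\<Sum>i<n. cnj (v $ i) * (z * v $ i))"
    by simp
  have e2: "Re (\<Sum>i<n. cnj (v $ i) * (\<Sum>j<n. of_real (A $$ (i,j)) * v $ j)) =
     Qf n (\<lambda>i j. A $$ (i,j)) x + Qf n (\<lambda>i j. A $$ (i,j)) y"
    unfolding x_def y_def by (rule Re_bilin)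
  have e3: "Re (\<Sum>i<n. cnj (v $ i) * (z * v $ i)) = Re z * (\<Sum>i<n. (x i)^2 + (y i)^2)"
    unfolding x_def y_def by (rule Re_diag)
  have nz: "\<exists>i<n. x i \<noteq> 0 \<or> y i \<noteq> 0"
  proof (rule ccontr)
    assume "\<not> ?thesis"
    hence "\<forall>i<n. v $ i = 0" unfolding x_def y_def by (simp add: complex_eq_iff)
    moreover have "dim_vec v = n" using v(1) by simp
    ultimately have "v = 0\<^sub>v n" by (intro eq_vecI) simp_all
    with v(2) show False by simp
  qed
  have "Re z * (\<Sum>i<n. (x i)^2 + (y i)^2) = Qf n (\<lambda>i j. A $$ (i,j)) x + Qf n (\<lambda>i j. A $$ (i,j)) y"
    using e1 e2 e3 by simp
  with nz show ?thesis by blast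
qed


lemma Qf_cong_a: "(\<And>i j. i < n \<Longrightarrow> j < n \<Longrightarrow> a i j = b i j) \<Longrightarrow> Qf n a f = Qf n b f"
  unfolding Qf_def by (intro sum.cong refl) auto

lemma Qf_lin: "Qf n (\<lambda>i j. a i j + t * b i j + t2 * c i j) f = Qf n a f + t * Qf n b f + t2 * Qf n c f"
  unfolding Qf_def by (simp add: sum.distrib sum_distrib_left algebra_simps)

lemma Qf_lin2: "Qf n (\<lambda>i j. t * b i j + t2 * c i j) f = t * Qf n b f + t2 * Qf n c f"
  unfolding Qf_def by (simp add: sum.distrib sum_distrib_left algebra_simps)

lemma abs_prod_le_sq: "\<bar>(a::real) * b\<bar> \<le> (a^2 + b^2) / 2"
proof -
  have "0 \<le> (\<bar>a\<bar> - \<bar>b\<bar>)^2" by simp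
  hence "2 * (\<bar>a\<bar> * \<bar>b\<bar>) \<le> a^2 + b^2" by (simp add: power2_eq_square algebra_simps)
  thus ?thesis by (simp add: abs_mult)
qed

lemma Qf_bound: "Qf n a f \<le> (\<Sum>i<n. \<Sum>j<n. \<bar>a i j\<bar>) * (\<Sum>i<n. (f i)^2)"
proof -
  let ?S = "\<Sum>i<n. (f i)^2"
  have fi: "(f i)^2 \<le> ?S" if "i < n" for i
    by (rule member_le_sum, insert that, auto)
  have "Qf n a f \<le> (\<Sum>i<n. \<Sum>j<n. \<bar>a i j\<bar> * ?S)"
    unfolding Qf_def
  proof (intro sum_mono)
    fix i j assume i: "i \<in> {..<n}" and j: "j \<in> {..<n}"
    have "a i j * f i * f j \<le> \<bar>a i j\<bar> * \<bar>f i * f j\<bar>"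
      by (metis abs_ge_self abs_mult mult.assoc)
    also have "\<bar>f i * f j\<bar> \<le> ?S" using abs_prod_le_sq[of "f i" "f j"] fi[of i] fi[of j] i j by simp
    hence "\<bar>a i j\<bar> * \<bar>f i * f j\<bar> \<le> \<bar>a i j\<bar> * ?S" by (intro mult_left_mono) auto
    finally show "a i j * f i * f j \<le> \<bar>a i j\<bar> * ?S" .
  qed
  also have "\<dots> = (\<Sum>i<n. \<Sum>j<n. \<bar>a i j\<bar>) * ?S" by (simp add: sum_distrib_right)
  finally show ?thesis .
qed

lemma large_kappa:
  assumes M: "M \<in> carrier_mat n n" and J2: "J2 \<in> carrier_mat n n" and J4: "J4 \<in> carrier_mat n n"
  and nsd: "neg_semidef_mat n J4" and nd: "neg_def_mat n (kb^2 \<cdot>\<^sub>m J2 + kb^4 \<cdot>\<^sub>m J4)" and n: "n \<ge> 1"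
  shows "\<exists>K. \<forall>\<kappa>\<ge>K. \<forall>z. eigenvalue (cplx_mat (M + \<kappa>^2 \<cdot>\<^sub>m J2 + \<kappa>^4 \<cdot>\<^sub>m J4)) z \<longrightarrow> Re z < 0"
proof -
  define s where "s = kb^2"
  define N where "N = kb^2 \<cdot>\<^sub>m J2 + kb^4 \<cdot>\<^sub>m J4"
  have N: "N \<in> carrier_mat n n" unfolding N_def using J2 J4 by simp
  define m2 where "m2 i j = J2 $$ (i,j)" for i j
  define m4 where "m4 i j = J4 $$ (i,j)" for i j
  define mM where "mM i j = M $$ (i,j)" for i j
  have QN: "Qf n (\<lambda>i j. N $$ (i,j)) f = s * Qf n m2 f + s^2 * Qf n m4 f" for f
  proof -
    have "Qf n (\<lambda>i j. N $$ (i,j)) f = Qf n (\<lambda>i j. s * m2 i j + s^2 * m4 i j) f"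
      by (rule Qf_cong_a, insert J2 J4, auto simp: N_def s_def m2_def m4_def power_mult[symmetric])
    thus ?thesis unfolding Qf_lin2 .
  qed
  have ndf: "Qf n (\<lambda>i j. N $$ (i,j)) f < 0" if "\<exists>i<n. f i \<noteq> 0" for f
    using neg_def_Qf[OF N nd[folded N_def] that] .
  from unif_negdef[OF ndf] obtain c where c: "c > 0" "\<And>f. Qf n (\<lambda>i j. N $$ (i,j)) f \<le> - c * (\<Sum>i<n. (f i)^2)"
    by blast
  have q4: "Qf n m4 f \<le> 0" for f unfolding m4_def by (rule neg_semidef_Qf[OF J4 nsd])
  have spos: "s > 0"
  proof -
    have "s \<noteq> 0"
    proof
      assume "s = 0"
      define f where "f i = (if i = 0 then 1 else (0::real))" for i :: nat
      have "Qf n (\<lambda>i j. N $$ (i,j)) f < 0" by (rule ndf, insert n, auto simp: f_def intro!: exI[of _ 0])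
      moreover have "Qf n (\<lambda>i j. N $$ (i,j)) f = 0" unfolding QN \<open>s = 0\<close> by simp
      ultimately show False by simp
    qed
    thus ?thesis unfolding s_def by simp
  qed
  define KM where "KM = (\<Sum>i<n. \<Sum>j<n. \<bar>mM i j\<bar>)"
  define K where "K = 1 + s + s * \<bar>KM\<bar> / c"
  have main: "Re z < 0" if \<kappa>: "\<kappa> \<ge> K" and ev: "eigenvalue (cplx_mat (M + \<kappa>^2 \<cdot>\<^sub>m J2 + \<kappa>^4 \<cdot>\<^sub>m J4)) z"
    for \<kappa> z
  proof -
    define t where "t = \<kappa>^2"
    have K1: "K \<ge> 1" unfolding K_def using spos c by simp
    have "t \<ge> \<kappa>" unfolding t_def using \<kappa> K1 by (simp add: power2_eq_square)
    hence tK: "t \<ge> K" using \<kappa> by simp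
    have ts: "t \<ge> s" using tK spos c unfolding K_def by (smt (verit) divide_nonneg_pos mult_nonneg_nonneg abs_ge_zero)
    have tKM: "t * c / s > KM"
    proof -
      have "t > s * \<bar>KM\<bar> / c" using tK spos unfolding K_def by simp
      hence "t * c > s * \<bar>KM\<bar>" using c(1) by (simp add: field_simps)
      hence "t * c / s > \<bar>KM\<bar>" using spos by (simp add: field_simps)
      thus ?thesis by simp
    qed
    let ?A = "M + \<kappa>^2 \<cdot>\<^sub>m J2 + \<kappa>^4 \<cdot>\<^sub>m J4"
    have A: "?A \<in> carrier_mat n n" using M J2 J4 by simp
    have QA: "Qf n (\<lambda>i j. ?A $$ (i,j)) f \<le> (KM - t * c / s) * (\<Sum>i<n. (f i)^2)" for f
    proof -
      have "Qf n (\<lambda>i j. ?A $$ (i,j)) f = Qf n (\<lambda>i j. mM i j + t * m2 i j + t^2 * m4 i j) f"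
        by (rule Qf_cong_a, insert M J2 J4, auto simp: t_def mM_def m2_def m4_def power_mult[symmetric])
      also have "\<dots> = Qf n mM f + t * Qf n m2 f + t^2 * Qf n m4 f" by (rule Qf_lin)
      finally have e1: "Qf n (\<lambda>i j. ?A $$ (i,j)) f = Qf n mM f + t * Qf n m2 f + t^2 * Qf n m4 f" .
      have e2: "t * Qf n m2 f + t^2 * Qf n m4 f = (t / s) * Qf n (\<lambda>i j. N $$ (i,j)) f + (t^2 - t * s) * Qf n m4 f"
        unfolding QN using spos by (simp add: field_simps power2_eq_square)
      have "t^2 - t * s \<ge> 0" using ts spos by (simp add: power2_eq_square)
      hence e3: "(t^2 - t * s) * Qf n m4 f \<le> 0"
        by (rule mult_nonneg_nonpos[OF _ q4])
      have e4: "(t / s) * Qf n (\<lambda>i j. N $$ (i,j)) f \<le> (t / s) * (- c * (\<Sum>i<n. (f i)^2))"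
        by (rule mult_left_mono[OF c(2)], insert ts spos, simp)
      have e5: "Qf n mM f \<le> KM * (\<Sum>i<n. (f i)^2)" unfolding KM_def by (rule Qf_bound)
      have "(t / s) * (- c * (\<Sum>i<n. (f i)^2)) = - (t * c / s) * (\<Sum>i<n. (f i)^2)" by simp
      with e1 e2 e3 e4 e5 show ?thesis by (simp add: algebra_simps)
    qed
    from eig_re[OF A ev] obtain x y where xy: "\<exists>i<n. x i \<noteq> 0 \<or> y i \<noteq> 0"
      "Re z * (\<Sum>i<n. (x i)^2 + (y i)^2) = Qf n (\<lambda>i j. ?A $$ (i,j)) x + Qf n (\<lambda>i j. ?A $$ (i,j)) y"
      by blast
    have Spos: "(\<Sum>i<n. (x i)^2 + (y i)^2) > 0"
    proof -
      from xy(1) obtain i where i: "i < n" "x i \<noteq> 0 \<or> y i \<noteq> 0" by blast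
      have "(x i)^2 + (y i)^2 > 0" using i(2) by (auto simp: add_pos_nonneg add_nonneg_pos)
      moreover have "(x i)^2 + (y i)^2 \<le> (\<Sum>i<n. (x i)^2 + (y i)^2)"
        by (rule member_le_sum, insert i, auto)
      ultimately show ?thesis by simp
    qed
    have "Re z * (\<Sum>i<n. (x i)^2 + (y i)^2) \<le> (KM - t * c / s) * (\<Sum>i<n. (x i)^2 + (y i)^2)"
    proof -
      have "(KM - t * c / s) * (\<Sum>i<n. (x i)^2 + (y i)^2) =
        (KM - t * c / s) * (\<Sum>i<n. (x i)^2) + (KM - t * c / s) * (\<Sum>i<n. (y i)^2)"
        by (simp add: sum.distrib distrib_left)
      thus ?thesis using xy(2) QA[of x] QA[of y] by linarith
    qed
    moreover have "(KM - t * c / s) * (\<Sum>i<n. (x i)^2 + (y i)^2) < 0"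
      using tKM Spos by (simp add: mult_neg_pos)
    ultimately have "Re z * (\<Sum>i<n. (x i)^2 + (y i)^2) < 0" by simp
    with Spos show ?thesis by (simp add: mult_less_0_iff)
  qed
  thus ?thesis by blast
qed


lemma cplx_char_poly:
  assumes A: "A \<in> carrier_mat n n"
  shows "char_poly (cplx_mat A) = map_poly complex_of_real (char_poly A)"
  unfolding cplx_mat_def by (rule of_real_hom.char_poly_hom[OF A])

lemma eig_iff_root:
  assumes A: "A \<in> carrier_mat n n"
  shows "eigenvalue (cplx_mat A) z \<longleftrightarrow> poly (map_poly complex_of_real (char_poly A)) z = 0"
proof -
  have "cplx_mat A \<in> carrier_mat n n" using A by (simp add: cplx_mat_def)
  from eigenvalue_root_char_poly[OF this] show ?thesis unfolding cplx_char_poly[OF A] .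
qed

lemma char_poly_coeff0:
  assumes A: "(A :: 'a :: field mat) \<in> carrier_mat n n"
  shows "coeff (char_poly A) 0 = det (- A)"
proof -
  have "char_matrix A 0 = A" using A by (intro eq_matI) (auto simp: char_matrix_def)
  thus ?thesis using char_poly_matrix[OF A, of 0] by (simp add: poly_0_coeff_0)
qed

lemma eig_set_finite:
  assumes A: "A \<in> carrier_mat n n"
  shows "finite {k. eigenvalue (cplx_mat A) k}"
proof -
  have "char_poly A \<noteq> 0" using degree_monic_char_poly[OF A] by auto
  hence "map_poly complex_of_real (char_poly A) \<noteq> 0" by simp
  from poly_roots_finite[OF this] show ?thesis unfolding eig_iff_root[OF A] .
qed

lemma eig_set_nonempty:
  assumes A: "A \<in> carrier_mat n n" and n: "n \<ge> 1"
  shows "\<exists>k. eigenvalue (cplx_mat A) k"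
proof -
  have "degree (map_poly complex_of_real (char_poly A)) = n" using degree_monic_char_poly[OF A] by simp
  hence "\<not> constant (poly (map_poly complex_of_real (char_poly A)))" using n by (simp add: constant_degree)
  from fundamental_theorem_of_algebra[OF this] show ?thesis unfolding eig_iff_root[OF A] .
qed

lemma sa_neg:
  assumes A: "A \<in> carrier_mat n n" and n: "n \<ge> 1"
    and neg: "\<And>z. eigenvalue (cplx_mat A) z \<Longrightarrow> Re z < 0"
  shows "spectral_abscissa A < 0"
proof -
  let ?S = "Re ` {k. eigenvalue (cplx_mat A) k}"
  have "finite ?S" using eig_set_finite[OF A] by simp
  moreover have "?S \<noteq> {}" using eig_set_nonempty[OF A n] by auto
  ultimately have "Max ?S \<in> ?S" by (rule Max_in)
  thus ?thesis unfolding spectral_abscissa_def using neg by auto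
qed

lemma sa_pos:
  assumes A: "A \<in> carrier_mat n n" and ev: "eigenvalue (cplx_mat A) z" and pos: "Re z > 0"
  shows "spectral_abscissa A > 0"
proof -
  let ?S = "Re ` {k. eigenvalue (cplx_mat A) k}"
  have "finite ?S" using eig_set_finite[OF A] by simp
  moreover have "Re z \<in> ?S" using ev by auto
  ultimately have "Re z \<le> Max ?S" by (rule Max_ge)
  thus ?thesis unfolding spectral_abscissa_def using pos by simp
qed

lemma large_poly_pos:
  assumes A: "(A :: real mat) \<in> carrier_mat n n"
  shows "\<exists>N. \<forall>x\<ge>N. poly (char_poly A) x \<ge> 1"
proof -
  have "lead_coeff (char_poly A) = 1" using degree_monic_char_poly[OF A] by simp
  with poly_pinfty_gt_lc[of "char_poly A"] show ?thesis by auto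
qed

lemma det_neg_pos_eig:
  assumes A: "(A :: real mat) \<in> carrier_mat n n" and d: "det (- A) < 0"
  shows "spectral_abscissa A > 0"
proof -
  obtain N where N: "\<And>x. x \<ge> N \<Longrightarrow> poly (char_poly A) x \<ge> 1" using large_poly_pos[OF A] by blast
  have "poly (char_poly A) 0 < 0" using d char_poly_coeff0[OF A] by (simp add: poly_0_coeff_0)
  moreover have "poly (char_poly A) (max N 1) > 0" using N[of "max N 1"] by simp
  ultimately obtain t where t: "t > 0" "poly (char_poly A) t = 0"
    using poly_IVT_pos[of 0 "max N 1" "char_poly A"] by force
  have "eigenvalue (cplx_mat A) (of_real t)" unfolding eig_iff_root[OF A] of_real_hom.poly_map_poly t(2) by simp
  from sa_pos[OF A this] t(1) show ?thesis by simp
qed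


lemma order_prod_linear:
  fixes as :: "complex list"
  shows "order k (\<Prod>a\<leftarrow>as. [:- a, 1:]) = count (mset as) k"
proof (induction as)
  case Nil
  show ?case by (simp add: order_1_eq_0)
next
  case (Cons a as)
  have nz: "(\<Prod>a\<leftarrow>as. [:- a, 1:]) \<noteq> 0" by (auto simp: prod_list_zero_iff)
  have "(\<Prod>a\<leftarrow>a # as. [:- a, 1:]) = [:- a, 1:] * (\<Prod>a\<leftarrow>as. [:- a, 1:])" by simp
  moreover have "[:- a, 1:] * (\<Prod>a\<leftarrow>as. [:- a, 1:]) \<noteq> 0" by (intro no_zero_divisors nz) simp
  hence "order k ([:- a, 1:] * (\<Prod>a\<leftarrow>as. [:- a, 1:])) = order k [:- a, 1:] + order k (\<Prod>a\<leftarrow>as. [:- a, 1:])"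
    by (rule order_mult)
  ultimately have "order k (\<Prod>a\<leftarrow>a # as. [:- a, 1:]) = order k [:- a, 1:] + order k (\<Prod>a\<leftarrow>as. [:- a, 1:])"
    by simp
  also have "order k [:- a, 1:] = (if a = k then 1 else 0)" unfolding order_linear' by auto
  finally show ?case using Cons by simp
qed

lemma poly_prod_linear_zero:
  fixes as :: "complex list"
  shows "poly (\<Prod>a\<leftarrow>as. [:- a, 1:]) k = 0 \<longleftrightarrow> k \<in> set as"
proof -
  have "(\<Prod>a\<leftarrow>as. [:- a, 1:]) = prod_list (map (\<lambda>a. [:- a, 1:]) as)" by simp
  hence "poly (\<Prod>a\<leftarrow>as. [:- a, 1:]) k = 0 \<longleftrightarrow> (\<exists>p\<in>set (map (\<lambda>a. [:- a, 1:]) as). poly p k = 0)"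
    by (simp only: poly_prod_list_zero_iff)
  thus ?thesis by auto
qed

lemma sum_count_filter:
  "(\<Sum>k\<in>{k. k \<in> set xs \<and> P k}. count (mset xs) k) = length (filter P xs)"
proof -
  let ?X = "filter_mset P (mset xs)"
  have "size ?X = sum (count ?X) (set_mset ?X)" by (rule size_multiset_overloaded_eq)
  also have "set_mset ?X = {k. k \<in> set xs \<and> P k}" by (simp only: set_mset_filter set_mset_mset)
  also have "sum (count ?X) {k. k \<in> set xs \<and> P k} = (\<Sum>k\<in>{k. k \<in> set xs \<and> P k}. count (mset xs) k)"
    by (intro sum.cong refl) (simp only: count_filter_mset mem_Collect_eq if_True)
  also have "size ?X = length (filter P xs)" by (simp only: mset_filter[symmetric] size_mset)
  finally show ?thesis by simp
qed

lemma root_structure: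
  assumes M: "M \<in> carrier_mat n n" and n: "n \<ge> 1" and d: "det M = 0" and nn: "num_neg_eigs M = n - 1"
  shows "(\<forall>z. poly (map_poly complex_of_real (char_poly M)) z = 0 \<longrightarrow> Re z \<ge> 0 \<longrightarrow> z = 0)
    \<and> coeff (char_poly M) 1 > 0"
proof -
  define p0 where "p0 = char_poly M"
  define pc where "pc = char_poly (cplx_mat M)"
  have pc: "pc = map_poly complex_of_real p0" unfolding pc_def p0_def by (rule cplx_char_poly[OF M])
  have cM: "cplx_mat M \<in> carrier_mat n n" using M by (simp add: cplx_mat_def)
  from char_poly_factorized[OF cM] obtain as where as: "pc = (\<Prod>a\<leftarrow>as. [:- a, 1:])" "length as = n"
    unfolding pc_def by blast
  have roots: "poly pc k = 0 \<longleftrightarrow> k \<in> set as" for k unfolding as(1) by (rule poly_prod_linear_zero)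
  have ord: "order k pc = count (mset as) k" for k unfolding as(1) by (rule order_prod_linear)
  have "num_neg_eigs M = (\<Sum>k\<in>{k. k \<in> set as \<and> Re k < 0}. count (mset as) k)"
    unfolding num_neg_eigs_def pc_def[symmetric] roots ord ..
  also have "\<dots> = length (filter (\<lambda>k. Re k < 0) as)" by (rule sum_count_filter)
  finally have Lneg: "length (filter (\<lambda>k. Re k < 0) as) = n - 1" using nn by simp
  have Lpos: "length (filter (\<lambda>k. \<not> Re k < 0) as) = 1"
    using sum_length_filter_compl[of "\<lambda>k. Re k < 0" as] Lneg as(2) n by simp
  then obtain w where w: "filter (\<lambda>k. \<not> Re k < 0) as = [w]"
    by (auto simp: length_Suc_conv)
  have "det (- M) = 0" using d det_0_negate[OF M] by simp
  hence "poly p0 0 = 0" unfolding p0_def by (simp add: poly_0_coeff_0 char_poly_coeff0[OF M])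
  hence "poly pc 0 = 0" unfolding pc by (simp add: poly_0_coeff_0)
  hence "0 \<in> set as" using roots by simp
  hence "0 \<in> set (filter (\<lambda>k. \<not> Re k < 0) as)" by simp
  hence w0: "w = 0" unfolding w by simp
  have h0: "z = 0" if z: "poly pc z = 0" "Re z \<ge> 0" for z
  proof -
    have "z \<in> set (filter (\<lambda>k. \<not> Re k < 0) as)" using z roots by simp
    thus ?thesis unfolding w w0 by simp
  qed
  have "count (mset as) 0 = count (mset (filter (\<lambda>k. \<not> Re k < 0) as)) 0"
    by (simp add: mset_filter)
  also have "\<dots> = 1" unfolding w w0 by simp
  finally have o1: "order 0 pc = 1" unfolding ord .
  have pcnz: "pc \<noteq> 0" unfolding pc_def using degree_monic_char_poly[OF cM] by auto
  have degpc: "degree pc = n" unfolding pc_def using degree_monic_char_poly[OF cM] by simp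
  have pdnz: "pderiv pc \<noteq> 0" using degpc n by (simp add: pderiv_eq_0_iff)
  have "order 0 pc = Suc (order 0 (pderiv pc))" by (rule order_pderiv[OF pcnz \<open>poly pc 0 = 0\<close>])
  hence "order 0 (pderiv pc) = 0" using o1 by simp
  hence "poly (pderiv pc) 0 \<noteq> 0" using pdnz order_root by blast
  hence "coeff pc 1 \<noteq> 0" by (simp add: poly_0_coeff_0 coeff_pderiv)
  hence c1nz: "coeff p0 1 \<noteq> 0" unfolding pc by simp
  have tpos: "poly p0 t > 0" if t: "t > 0" for t
  proof -
    obtain N where N: "\<And>x. x \<ge> N \<Longrightarrow> poly p0 x \<ge> 1" using large_poly_pos[OF M] unfolding p0_def by blast
    have nz: "poly p0 x \<noteq> 0" if "x > 0" for x
    proof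
      assume "poly p0 x = 0"
      hence "poly pc (of_real x) = 0" unfolding pc of_real_hom.poly_map_poly by simp
      from h0[OF this] that show False by simp
    qed
    show ?thesis
    proof (rule ccontr)
      assume "\<not> ?thesis"
      with nz[OF t] have neg: "poly p0 t < 0" by simp
      have "poly p0 (max N (t+1)) > 0" using N[of "max N (t+1)"] by simp
      then obtain x where "x > t" "poly p0 x = 0" using poly_IVT_pos[of t "max N (t+1)" p0] neg by force
      with nz[of x] t show False by simp
    qed
  qed
  have "coeff p0 1 > 0"
  proof (rule ccontr)
    assume "\<not> ?thesis"
    with c1nz have neg: "coeff p0 1 < 0" by simp
    have "DERIV (poly p0) 0 :> poly (pderiv p0) 0" by (rule poly_DERIV)
    moreover have "poly (pderiv p0) 0 = coeff p0 1" by (simp add: poly_0_coeff_0 coeff_pderiv)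
    ultimately have "DERIV (poly p0) 0 :> coeff p0 1" by simp
    from DERIV_neg_dec_right[OF this neg] obtain dd where dd: "dd > 0"
      "\<And>h. h > 0 \<Longrightarrow> h < dd \<Longrightarrow> poly p0 (0 + h) < poly p0 0" by blast
    have "poly p0 (dd/2) < poly p0 0" using dd by simp
    moreover have "poly p0 (dd/2) > 0" using tpos dd by simp
    ultimately show False using \<open>poly p0 0 = 0\<close> by simp
  qed
  with h0 show ?thesis unfolding pc p0_def by blast
qed


lemma poly_eval_hom: "comm_ring_hom (\<lambda>q::real poly. poly q x)"
  by (unfold_locales) (auto simp: poly_mult)

definition Jfam :: "real mat \<Rightarrow> real mat \<Rightarrow> real mat \<Rightarrow> real \<Rightarrow> real mat" where
  "Jfam M J2 J4 \<kappa> = M + \<kappa>^2 \<cdot>\<^sub>m J2 + \<kappa>^4 \<cdot>\<^sub>m J4"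

definition Jpoly :: "nat \<Rightarrow> real mat \<Rightarrow> real mat \<Rightarrow> real mat \<Rightarrow> real poly mat" where
  "Jpoly n M J2 J4 = mat n n (\<lambda>(i,j). [:M $$ (i,j), 0, J2 $$ (i,j), 0, J4 $$ (i,j):])"

lemma Jfam_carrier:
  assumes "M \<in> carrier_mat n n" "J2 \<in> carrier_mat n n" "J4 \<in> carrier_mat n n"
  shows "Jfam M J2 J4 \<kappa> \<in> carrier_mat n n"
  using assms unfolding Jfam_def by simp

lemma Jpoly_eval:
  assumes M: "M \<in> carrier_mat n n" and J2: "J2 \<in> carrier_mat n n" and J4: "J4 \<in> carrier_mat n n"
  shows "map_mat (\<lambda>q. poly q \<kappa>) (Jpoly n M J2 J4) = Jfam M J2 J4 \<kappa>"
  by (rule eq_matI, insert M J2 J4, auto simp: Jpoly_def Jfam_def algebra_simps power2_eq_square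
     power4_eq_xxxx)

lemma char_poly_Jfam:
  assumes M: "M \<in> carrier_mat n n" and J2: "J2 \<in> carrier_mat n n" and J4: "J4 \<in> carrier_mat n n"
  shows "coeff (char_poly (Jfam M J2 J4 \<kappa>)) i = poly (coeff (char_poly (Jpoly n M J2 J4)) i) \<kappa>"
proof -
  have Jp: "Jpoly n M J2 J4 \<in> carrier_mat n n" unfolding Jpoly_def by simp
  have "char_poly (Jfam M J2 J4 \<kappa>) = map_poly (\<lambda>q. poly q \<kappa>) (char_poly (Jpoly n M J2 J4))"
    unfolding Jpoly_eval[OF M J2 J4, symmetric] by (rule comm_ring_hom.char_poly_hom[OF poly_eval_hom Jp])
  thus ?thesis by (simp add: coeff_map_poly)
qed

lemma det_Jfam_poly:
  assumes M: "M \<in> carrier_mat n n" and J2: "J2 \<in> carrier_mat n n" and J4: "J4 \<in> carrier_mat n n"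
  shows "\<exists>q. \<forall>\<kappa>. det (- Jfam M J2 J4 \<kappa>) = poly q \<kappa>"
proof -
  have "det (- Jfam M J2 J4 \<kappa>) = poly (coeff (char_poly (Jpoly n M J2 J4)) 0) \<kappa>" for \<kappa>
    using char_poly_coeff0[OF Jfam_carrier[OF M J2 J4]] char_poly_Jfam[OF M J2 J4] by metis
  thus ?thesis by blast
qed

lemma MS_of:
  assumes M: "M \<in> carrier_mat n n" and J2: "J2 \<in> carrier_mat n n" and J4: "J4 \<in> carrier_mat n n"
  and n: "n \<ge> 1" and d: "det M = 0" and nn: "num_neg_eigs M = n - 1"
  and nsd: "neg_semidef_mat n J4" and nd: "neg_def_mat n (kb^2 \<cdot>\<^sub>m J2 + kb^4 \<cdot>\<^sub>m J4)"
  and e: "e > 0" and init: "\<And>\<kappa>. 0 < \<kappa> \<Longrightarrow> \<kappa> < e \<Longrightarrow> det (- Jfam M J2 J4 \<kappa>) > 0"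
  and k2: "k2 > 0" and neg: "det (- Jfam M J2 J4 k2) < 0"
  shows "microphase_sep (\<lambda>\<kappa>. spectral_abscissa (Jfam M J2 J4 \<kappa>))"
proof -
  define P where "P \<kappa> = char_poly (Jfam M J2 J4 \<kappa>)" for \<kappa>
  have JC: "Jfam M J2 J4 \<kappa> \<in> carrier_mat n n" for \<kappa> by (rule Jfam_carrier[OF M J2 J4])
  have deg: "degree (P \<kappa>) \<le> n" and monic: "coeff (P \<kappa>) n = 1" for \<kappa>
    unfolding P_def using degree_monic_char_poly[OF JC] by auto
  have cont: "isCont (\<lambda>\<kappa>. coeff (P \<kappa>) i) 0" for i
    unfolding P_def char_poly_Jfam[OF M J2 J4] by (rule DERIV_isCont[OF poly_DERIV])
  have J0: "Jfam M J2 J4 0 = M" unfolding Jfam_def by (rule eq_matI, insert M J2 J4, auto)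
  from root_structure[OF M n d nn]
  have h0: "\<And>z. poly (map_poly of_real (P 0)) z = 0 \<Longrightarrow> Re z \<ge> 0 \<Longrightarrow> z = 0"
    and h1: "coeff (P 0) 1 > 0" unfolding P_def J0 by auto
  have h2: "coeff (P \<kappa>) 0 > 0" if "0 < \<kappa>" "\<kappa> < e" for \<kappa>
    unfolding P_def char_poly_coeff0[OF JC] using init that .
  from small_kappa[OF n deg monic cont h0 h1 e h2] obtain \<epsilon> where eps: "\<epsilon> > 0"
    "\<And>\<kappa>. 0 < \<kappa> \<Longrightarrow> \<kappa> < \<epsilon> \<Longrightarrow> (\<forall>z. poly (map_poly of_real (P \<kappa>)) z = 0 \<longrightarrow> Re z < 0)" by blast
  have small: "spectral_abscissa (Jfam M J2 J4 \<kappa>) < 0" if "0 < \<kappa>" "\<kappa> < \<epsilon>" for \<kappa>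
  proof (rule sa_neg[OF JC n])
    fix z assume "eigenvalue (cplx_mat (Jfam M J2 J4 \<kappa>)) z"
    hence "poly (map_poly of_real (P \<kappa>)) z = 0" unfolding eig_iff_root[OF JC] P_def .
    thus "Re z < 0" using eps(2)[OF that] by blast
  qed
  have mid: "spectral_abscissa (Jfam M J2 J4 k2) > 0" by (rule det_neg_pos_eig[OF JC neg])
  from large_kappa[OF M J2 J4 nsd nd n] obtain K where
    K: "\<And>\<kappa> z. \<kappa> \<ge> K \<Longrightarrow> eigenvalue (cplx_mat (M + \<kappa>^2 \<cdot>\<^sub>m J2 + \<kappa>^4 \<cdot>\<^sub>m J4)) z \<Longrightarrow> Re z < 0"
    by blast
  have large: "spectral_abscissa (Jfam M J2 J4 \<kappa>) < 0" if "\<kappa> \<ge> K" for \<kappa>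
    by (rule sa_neg[OF JC n], unfold Jfam_def, rule K[OF that])
  define k0 where "k0 = min \<epsilon> (k2 / 2)"
  have k0: "k0 > 0" "k0 < k2" unfolding k0_def using eps(1) k2 by auto
  have A: "\<forall>\<kappa>. 0 < \<kappa> \<and> \<kappa> < k0 \<longrightarrow> spectral_abscissa (Jfam M J2 J4 \<kappa>) < 0"
    using small k0_def by auto
  have B: "k0 < k2 \<and> k2 < max K (k2 + 1) \<and> spectral_abscissa (Jfam M J2 J4 k2) > 0 \<and>
      spectral_abscissa (Jfam M J2 J4 (max K (k2 + 1))) < 0"
    using k0 mid large[of "max K (k2 + 1)"] by auto
  show ?thesis unfolding microphase_sep_def using k0(1) A B by blast
qed


lemma mat_delete_same_row:
  assumes "dim_row X = dim_row Y" "dim_col X = dim_col Y"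
    and "\<And>i k. i < dim_row X \<Longrightarrow> k < dim_col X \<Longrightarrow> i \<noteq> p \<Longrightarrow> X $$ (i,k) = Y $$ (i,k)"
  shows "mat_delete X p q = mat_delete Y p q"
  unfolding mat_delete_def using assms by (intro eq_matI) auto

lemma det_rank1_affine:
  fixes A :: "real mat"
  assumes A: "A \<in> carrier_mat n n"
  shows "\<exists>\<alpha> \<beta>. \<forall>t. det (mat n n (\<lambda>(i,k). A $$ (i,k) + t * u i * w k)) = \<alpha> + t * \<beta>"
proof (cases "\<exists>p<n. u p \<noteq> 0")
  case False
  have "mat n n (\<lambda>(i,k). A $$ (i,k) + t * u i * w k) = A" for t
    using False A by (intro eq_matI) auto
  thus ?thesis by (intro exI[of _ "det A"] exI[of _ 0]) simp
next
  case True
  then obtain p where p: "p < n" "u p \<noteq> 0" by blast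
  define X where "X t = mat n n (\<lambda>(i,k). A $$ (i,k) + t * u i * w k)" for t
  define Y where "Y t = mat n n (\<lambda>(i,k). if i = p then A $$ (p,k) + t * u p * w k
      else A $$ (i,k) - (u i / u p) * A $$ (p,k))" for t
  define E where "E = mat n n (\<lambda>(i,j). if i = j then 1 else if j = p then u i / u p else (0::real))"
  have E: "E \<in> carrier_mat n n" unfolding E_def by simp
  have Y: "Y t \<in> carrier_mat n n" for t unfolding Y_def by simp
  have XEY: "X t = E * Y t" for t
  proof (rule eq_matI)
    fix i k assume i: "i < dim_row (E * Y t)" and k: "k < dim_col (E * Y t)"
    hence i: "i < n" and k: "k < n" using E Y[of t] by auto
    have "(E * Y t) $$ (i,k) = row E i \<bullet> col (Y t) k" using i k E Y[of t] by simp
    also have "\<dots> = (\<Sum>j\<in>{0..<n}. row E i $ j * col (Y t) k $ j)"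
      unfolding scalar_prod_def using Y[of t] by simp
    also have "\<dots> = (\<Sum>j<n. E $$ (i,j) * Y t $$ (j,k))"
      unfolding atLeast0LessThan using i k E Y[of t] by (intro sum.cong refl) simp
    also have "\<dots> = (\<Sum>j<n. (if j = i then Y t $$ (i,k) else 0) +
        (if j = p then (if i = p then 0 else u i / u p * Y t $$ (p,k)) else 0))"
      by (rule sum.cong, insert i, auto simp: E_def)
    also have "\<dots> = Y t $$ (i,k) + (if i = p then 0 else u i / u p * Y t $$ (p,k))"
      unfolding sum.distrib using i p by simp
    also have "\<dots> = X t $$ (i,k)"
      using i k p unfolding X_def Y_def by (auto simp: field_simps)
    finally show "X t $$ (i,k) = (E * Y t) $$ (i,k)" by simp
  qed (insert E Y[of t], auto simp: X_def)
  have detE: "det E = 1"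
  proof -
    have "det E = (\<Sum>j<n. E $$ (p,j) * cofactor E p j)" by (rule laplace_expansion_row[OF E p(1)])
    also have "\<dots> = (\<Sum>j<n. if j = p then cofactor E p j else 0)"
      by (rule sum.cong, insert p, auto simp: E_def)
    also have "\<dots> = cofactor E p p" using p by simp
    also have "\<dots> = det (mat_delete E p p)" unfolding cofactor_def by (simp add: mult_2[symmetric])
    also have "mat_delete E p p = 1\<^sub>m (n - 1)"
      by (rule eq_matI, insert p, auto simp: mat_delete_def E_def)
    finally show ?thesis by simp
  qed
  define cf where "cf k = cofactor (Y 0) p k" for k
  have cofY: "cofactor (Y t) p k = cf k" for t k
    unfolding cf_def cofactor_def
    by (rule arg_cong[of _ _ "\<lambda>B. (-1)^(p+k) * det B"], rule mat_delete_same_row, auto simp: Y_def)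
  have "det (X t) = A' + t * B'" if "A' = (\<Sum>k<n. A $$ (p,k) * cf k)" "B' = (\<Sum>k<n. u p * w k * cf k)" for t A' B'
  proof -
    have "det (X t) = det E * det (Y t)" unfolding XEY by (rule det_mult[OF E Y])
    also have "\<dots> = det (Y t)" using detE by simp
    also have "\<dots> = (\<Sum>k<n. Y t $$ (p,k) * cofactor (Y t) p k)" by (rule laplace_expansion_row[OF Y p(1)])
    also have "\<dots> = (\<Sum>k<n. A $$ (p,k) * cf k + t * (u p * w k * cf k))"
    proof (rule sum.cong[OF refl])
      fix k assume k: "k \<in> {..<n}"
      have "Y t $$ (p,k) = A $$ (p,k) + t * u p * w k" using k p unfolding Y_def by simp
      thus "Y t $$ (p,k) * cofactor (Y t) p k = A $$ (p,k) * cf k + t * (u p * w k * cf k)"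
        unfolding cofY by (simp add: algebra_simps)
    qed
    also have "\<dots> = A' + t * B'" unfolding that sum.distrib sum_distrib_left ..
    finally show ?thesis .
  qed
  thus ?thesis unfolding X_def by blast
qed


lemma vertex_max:
  fixes g :: "(nat \<Rightarrow> real) \<Rightarrow> real"
  assumes aff: "\<And>d j. j < m \<Longrightarrow> \<exists>\<alpha> \<beta>. \<forall>x. g (d(j:=x)) = \<alpha> + x * \<beta>"
  and loc: "\<And>d d'. (\<forall>j<m. d j = d' j) \<Longrightarrow> g d = g d'"
  and d: "\<forall>j<m. lo j \<le> d j \<and> d j \<le> hi j"
  shows "\<exists>v \<in> PiE {..<m} (\<lambda>j. {lo j, hi j}). g v \<ge> g d"
proof -
  have "k \<le> m \<Longrightarrow> \<exists>d'. (\<forall>j<m. lo j \<le> d' j \<and> d' j \<le> hi j) \<and> (\<forall>j<k. d' j \<in> {lo j, hi j}) \<and> g d' \<ge> g d" for k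
  proof (induction k)
    case 0
    show ?case using d by (intro exI[of _ d]) auto
  next
    case (Suc k)
    then obtain d' where d': "\<forall>j<m. lo j \<le> d' j \<and> d' j \<le> hi j" "\<forall>j<k. d' j \<in> {lo j, hi j}" "g d' \<ge> g d"
      by auto
    have k: "k < m" using Suc by simp
    from aff[OF k, of d'] obtain \<alpha> \<beta> where ab: "\<And>x. g (d'(k:=x)) = \<alpha> + x * \<beta>" by blast
    define e where "e = (if \<beta> \<ge> 0 then hi k else lo k)"
    have "\<alpha> + e * \<beta> \<ge> \<alpha> + d' k * \<beta>"
      using d'(1) k unfolding e_def by (auto intro: mult_right_mono mult_right_mono_neg)
    moreover have "g d' = \<alpha> + d' k * \<beta>" using ab[of "d' k"] by simp
    ultimately have "g (d'(k:=e)) \<ge> g d'" using ab[of e] by simp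
    moreover have "\<forall>j<m. lo j \<le> (d'(k:=e)) j \<and> (d'(k:=e)) j \<le> hi j" using d'(1) k unfolding e_def by auto
    moreover have "\<forall>j<Suc k. (d'(k:=e)) j \<in> {lo j, hi j}" using d'(2) unfolding e_def by (auto simp: less_Suc_eq)
    ultimately show ?case using d'(3) by (intro exI[of _ "d'(k:=e)"]) (use order_trans in blast)
  qed
  from this[of m] obtain d' where d': "\<forall>j<m. d' j \<in> {lo j, hi j}" "g d' \<ge> g d" by auto
  define v where "v = restrict d' {..<m}"
  have "v \<in> PiE {..<m} (\<lambda>j. {lo j, hi j})" unfolding v_def using d'(1) by auto
  moreover have "g v = g d'" by (rule loc, auto simp: v_def)
  ultimately show ?thesis using d'(2) by (intro bexI[of _ v]) simp_all
qed

lemma vertex_min: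
  fixes g :: "(nat \<Rightarrow> real) \<Rightarrow> real"
  assumes aff: "\<And>d j. j < m \<Longrightarrow> \<exists>\<alpha> \<beta>. \<forall>x. g (d(j:=x)) = \<alpha> + x * \<beta>"
  and loc: "\<And>d d'. (\<forall>j<m. d j = d' j) \<Longrightarrow> g d = g d'"
  and d: "\<forall>j<m. lo j \<le> d j \<and> d j \<le> hi j"
  shows "\<exists>v \<in> PiE {..<m} (\<lambda>j. {lo j, hi j}). g v \<le> g d"
proof -
  have "\<exists>v \<in> PiE {..<m} (\<lambda>j. {lo j, hi j}). - g v \<ge> - g d"
  proof (rule vertex_max[OF _ _ d])
    fix d :: "nat \<Rightarrow> real" and j assume "j < m"
    from aff[OF this, of d] obtain \<alpha> \<beta> where "\<forall>x. g (d(j:=x)) = \<alpha> + x * \<beta>" by blast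
    thus "\<exists>\<alpha> \<beta>. \<forall>x. - g (d(j:=x)) = \<alpha> + x * \<beta>" by (intro exI[of _ "-\<alpha>"] exI[of _ "-\<beta>"]) auto
  next
    fix d d' :: "nat \<Rightarrow> real" assume "\<forall>j<m. d j = d' j"
    thus "- g d = - g d'" using loc by metis
  qed
  thus ?thesis by auto
qed

lemma poly_sign_near0:
  fixes q :: "real poly"
  shows "(\<exists>\<epsilon>>0. \<forall>\<kappa>. 0<\<kappa> \<and> \<kappa><\<epsilon> \<longrightarrow> poly q \<kappa> > 0) \<or> (\<exists>\<epsilon>>0. \<forall>\<kappa>. 0<\<kappa> \<and> \<kappa><\<epsilon> \<longrightarrow> poly q \<kappa> \<le> 0)"
proof (cases "q = 0")
  case True
  thus ?thesis by (intro disjI2 exI[of _ 1]) auto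
next
  case False
  define R where "R = {x. poly q x = 0 \<and> x > 0}"
  have fin: "finite R" unfolding R_def using poly_roots_finite[OF False] by (rule rev_finite_subset) auto
  define \<epsilon> where "\<epsilon> = (if R = {} then 1 else Min R)"
  have epos: "\<epsilon> > 0" unfolding \<epsilon>_def using fin by (auto simp: R_def)
  have nz: "poly q x \<noteq> 0" if "0 < x" "x < \<epsilon>" for x
  proof
    assume "poly q x = 0"
    hence "x \<in> R" unfolding R_def using that by auto
    hence "Min R \<le> x" "R \<noteq> {}" using fin by auto
    with that show False unfolding \<epsilon>_def by simp
  qed
  have noSwitch: False if "0 < a" "a < \<epsilon>" "0 < b" "b < \<epsilon>" "poly q a * poly q b < 0" for a b
  proof -
    have "a \<noteq> b" using that(5) by (auto simp: mult_less_0_iff)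
    hence "min a b < max a b" by (simp add: min_def max_def)
    moreover have "poly q (min a b) * poly q (max a b) < 0" using that(5)
      by (cases "a \<le> b") (auto simp: min_def max_def mult.commute)
    ultimately obtain x where "x > min a b" "x < max a b" "poly q x = 0" using poly_IVT by blast
    moreover have "0 < x" "x < \<epsilon>" using \<open>x > min a b\<close> \<open>x < max a b\<close> that(1-4) by auto
    ultimately show False using nz[of x] by blast
  qed
  show ?thesis
  proof (cases "poly q (\<epsilon>/2) > 0")
    case True
    have "poly q \<kappa> > 0" if "0 < \<kappa>" "\<kappa> < \<epsilon>" for \<kappa>
    proof (rule ccontr)
      assume "\<not> ?thesis"
      with nz[OF that] have "poly q \<kappa> < 0" by simp
      hence "poly q \<kappa> * poly q (\<epsilon>/2) < 0" using True by (simp add: mult_neg_pos)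
      from noSwitch[OF that _ _ this] epos show False by simp
    qed
    thus ?thesis using epos by blast
  next
    case False
    have "poly q \<kappa> \<le> 0" if "0 < \<kappa>" "\<kappa> < \<epsilon>" for \<kappa>
    proof (rule ccontr)
      assume "\<not> ?thesis"
      hence pos: "poly q \<kappa> > 0" by simp
      have "poly q (\<epsilon>/2) < 0" using False nz[of "\<epsilon>/2"] epos by simp
      hence "poly q \<kappa> * poly q (\<epsilon>/2) < 0" using pos by (simp add: mult_pos_neg)
      from noSwitch[OF that _ _ this] epos show False by simp
    qed
    thus ?thesis using epos by blast
  qed
qed


lemma mult_index_sum:
  assumes A: "A \<in> carrier_mat a b" and B: "B \<in> carrier_mat b c" and i: "i < a" and k: "k < c"
  shows "(A * B) $$ (i,k) = (\<Sum>j<b. A $$ (i,j) * B $$ (j,k))"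
proof -
  have "(A * B) $$ (i,k) = row A i \<bullet> col B k" using A B i k by simp
  also have "\<dots> = (\<Sum>j\<in>{0..<b}. row A i $ j * col B k $ j)" unfolding scalar_prod_def using B by simp
  also have "\<dots> = (\<Sum>j<b. A $$ (i,j) * B $$ (j,k))"
    unfolding atLeast0LessThan using A B i k by (intro sum.cong refl) simp
  finally show ?thesis .
qed

definition Md :: "nat \<Rightarrow> nat \<Rightarrow> real mat \<Rightarrow> real mat \<Rightarrow> (nat \<Rightarrow> real) \<Rightarrow> real mat" where
  "Md n m rB rC d = mat n n (\<lambda>(i,k). \<Sum>j<m. rB $$ (i,j) * d j * rC $$ (j,k))"

lemma Md_carrier: "Md n m rB rC d \<in> carrier_mat n n" unfolding Md_def by simp

lemma Md_loc: "(\<forall>j<m. d j = d' j) \<Longrightarrow> Md n m rB rC d = Md n m rB rC d'"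
  unfolding Md_def by (intro eq_matI) (auto intro!: sum.cong)

lemma BDC_Md:
  assumes rB: "rB \<in> carrier_mat n m" and rC: "rC \<in> carrier_mat m n" and D: "D \<in> carrier_mat m m"
    and dg: "diagonal_mat D"
  shows "rB * D * rC = Md n m rB rC (\<lambda>j. D $$ (j,j))"
proof (rule eq_matI)
  have BD: "rB * D \<in> carrier_mat n m" using rB D by simp
  fix i k assume "i < dim_row (Md n m rB rC (\<lambda>j. D $$ (j,j)))" "k < dim_col (Md n m rB rC (\<lambda>j. D $$ (j,j)))"
  hence i: "i < n" and k: "k < n" unfolding Md_def by auto
  have bd: "(rB * D) $$ (i,j) = rB $$ (i,j) * D $$ (j,j)" if j: "j < m" for j
  proof -
    have "(rB * D) $$ (i,j) = (\<Sum>j'<m. rB $$ (i,j') * D $$ (j',j))" by (rule mult_index_sum[OF rB D i j])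
    also have "\<dots> = (\<Sum>j'<m. if j' = j then rB $$ (i,j) * D $$ (j,j) else 0)"
      using dg D j unfolding diagonal_mat_def by (intro sum.cong refl) auto
    also have "\<dots> = rB $$ (i,j) * D $$ (j,j)" using j by simp
    finally show ?thesis .
  qed
  have "(rB * D * rC) $$ (i,k) = (\<Sum>j<m. (rB * D) $$ (i,j) * rC $$ (j,k))" by (rule mult_index_sum[OF BD rC i k])
  also have "\<dots> = (\<Sum>j<m. rB $$ (i,j) * D $$ (j,j) * rC $$ (j,k))" by (intro sum.cong refl) (simp add: bd)
  finally show "(rB * D * rC) $$ (i,k) = Md n m rB rC (\<lambda>j. D $$ (j,j)) $$ (i,k)"
    unfolding Md_def using i k by simp
qed (insert rB rC, auto simp: Md_def)

lemma Md_affine: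
  assumes J2: "J2 \<in> carrier_mat n n" and J4: "J4 \<in> carrier_mat n n" and j: "j < m"
  shows "\<exists>\<alpha> \<beta>. \<forall>x. det (- Jfam (Md n m rB rC (d(j:=x))) J2 J4 \<kappa>) = \<alpha> + x * \<beta>"
proof -
  define A where "A = - Jfam (Md n m rB rC (d(j:=0))) J2 J4 \<kappa>"
  have A: "A \<in> carrier_mat n n" unfolding A_def using Jfam_carrier[OF Md_carrier J2 J4] by simp
  have Msplit: "Md n m rB rC (d(j:=x)) $$ (i,k) = Md n m rB rC (d(j:=0)) $$ (i,k) + rB $$ (i,j) * x * rC $$ (j,k)"
    if "i < n" "k < n" for x i k
  proof -
    have jm: "j \<in> {..<m}" using j by simp
    have "Md n m rB rC (d(j:=x)) $$ (i,k) = (\<Sum>j'<m. rB $$ (i,j') * (d(j:=x)) j' * rC $$ (j',k))"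
      unfolding Md_def using that by simp
    also have "\<dots> = rB $$ (i,j) * x * rC $$ (j,k) + (\<Sum>j'\<in>{..<m} - {j}. rB $$ (i,j') * d j' * rC $$ (j',k))"
      by (subst sum.remove[OF _ jm], auto intro!: sum.cong)
    finally have e1: "Md n m rB rC (d(j:=x)) $$ (i,k) = rB $$ (i,j) * x * rC $$ (j,k) + (\<Sum>j'\<in>{..<m} - {j}. rB $$ (i,j') * d j' * rC $$ (j',k))" .
    have "Md n m rB rC (d(j:=0)) $$ (i,k) = (\<Sum>j'<m. rB $$ (i,j') * (d(j:=0)) j' * rC $$ (j',k))"
      unfolding Md_def using that by simp
    also have "\<dots> = (\<Sum>j'\<in>{..<m} - {j}. rB $$ (i,j') * d j' * rC $$ (j',k))"
      by (subst sum.remove[OF _ jm], auto intro!: sum.cong)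
    finally show ?thesis using e1 by simp
  qed
  have eq: "- Jfam (Md n m rB rC (d(j:=x))) J2 J4 \<kappa> = mat n n (\<lambda>(i,k). A $$ (i,k) + x * (- rB $$ (i,j)) * rC $$ (j,k))" for x
  proof (rule eq_matI)
    fix i k assume "i < dim_row (mat n n (\<lambda>(i,k). A $$ (i,k) + x * (- rB $$ (i,j)) * rC $$ (j,k)))"
      "k < dim_col (mat n n (\<lambda>(i,k). A $$ (i,k) + x * (- rB $$ (i,j)) * rC $$ (j,k)))"
    hence i: "i < n" and k: "k < n" by auto
    show "(- Jfam (Md n m rB rC (d(j:=x))) J2 J4 \<kappa>) $$ (i,k) = mat n n (\<lambda>(i,k). A $$ (i,k) + x * (- rB $$ (i,j)) * rC $$ (j,k)) $$ (i,k)"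
      using i k J2 J4 Msplit[OF i k, of x] unfolding A_def Jfam_def by (simp add: Md_carrier Md_def[symmetric] algebra_simps)
  qed (insert carrier_matD[OF Jfam_carrier[OF Md_carrier J2 J4, of m rB rC "d(j:=x)" \<kappa>]], simp_all)
  from det_rank1_affine[OF A, of "\<lambda>i. - rB $$ (i,j)" "\<lambda>k. rC $$ (j,k)"] obtain \<alpha> \<beta> where
    "\<forall>t. det (mat n n (\<lambda>(i,k). A $$ (i,k) + t * (- rB $$ (i,j)) * rC $$ (j,k))) = \<alpha> + t * \<beta>" by blast
  thus ?thesis unfolding eq[symmetric] by blast
qed


theorem theorem2:
  fixes n m :: nat and B C :: "int mat" and J2 J4 :: "real mat"
    and lo hi :: "nat \<Rightarrow> real"
  assumes "n \<ge> 1" and "m \<ge> 1"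
    and "B \<in> carrier_mat n m" and "C \<in> carrier_mat m n"
    and "\<forall>j<m. 0 \<le> lo j \<and> lo j \<le> hi j"
    and "J2 \<in> carrier_mat n n" and "J4 \<in> carrier_mat n n"
    and "symmetric_mat J2" and "symmetric_mat J4"
    \<comment> \<open>(A1)\<close>
    and A1a: "\<forall>D\<in>diag_set m lo hi.
               det (real_of_int_mat B * D * real_of_int_mat C) = 0 \<and>
               num_neg_eigs (real_of_int_mat B * D * real_of_int_mat C) = n - 1"
    and A1b: "\<exists>v\<in>carrier_vec n. v \<noteq> 0\<^sub>v n \<and> (\<forall>i<n. v $ i \<ge> 0) \<and>
               transpose_mat (real_of_int_mat B) *\<^sub>v v = 0\<^sub>v m"
    \<comment> \<open>(A2)\<close>
    and "indefinite_mat n J2" and "neg_semidef_mat n J4"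
    and "\<exists>\<kappa>. neg_def_mat n (\<kappa>^2 \<cdot>\<^sub>m J2 + \<kappa>^4 \<cdot>\<^sub>m J4)"
    \<comment> \<open>hypothesis on \<Psi>^- or \<Psi>^+\<close>
    and "let PsiM = (\<lambda>\<kappa>. Inf ((\<lambda>D. det (- Jmat B C J2 J4 D \<kappa>)) ` diag_set m lo hi));
             PsiP = (\<lambda>\<kappa>. Sup ((\<lambda>D. det (- Jmat B C J2 J4 D \<kappa>)) ` diag_set m lo hi))
         in (initially_positive PsiM \<and> neg_sign_change PsiM) \<or>
            (initially_positive PsiP \<and> neg_sign_change PsiP)"
  shows "\<exists>D\<in>diag_set m lo hi. microphase_sep (\<lambda>\<kappa>. spectral_abscissa (Jmat B C J2 J4 D \<kappa>))"
proof -
  have n: "n \<ge> 1" and Bc: "B \<in> carrier_mat n m" and Cc: "C \<in> carrier_mat m n"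
    and lohi: "\<forall>j<m. 0 \<le> lo j \<and> lo j \<le> hi j" and J2: "J2 \<in> carrier_mat n n" and J4: "J4 \<in> carrier_mat n n"
    and nsd: "neg_semidef_mat n J4" and ex: "\<exists>\<kappa>. neg_def_mat n (\<kappa>^2 \<cdot>\<^sub>m J2 + \<kappa>^4 \<cdot>\<^sub>m J4)"
    using assms by auto
  note hyp = assms(15)
  obtain kb where nd: "neg_def_mat n (kb^2 \<cdot>\<^sub>m J2 + kb^4 \<cdot>\<^sub>m J4)" using ex by blast
  define rB where "rB = real_of_int_mat B"
  define rC where "rC = real_of_int_mat C"
  have rB: "rB \<in> carrier_mat n m" using Bc unfolding rB_def real_of_int_mat_def by simp
  have rC: "rC \<in> carrier_mat m n" using Cc unfolding rC_def real_of_int_mat_def by simp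
  define Phi where "Phi d \<kappa> = det (- Jfam (Md n m rB rC d) J2 J4 \<kappa>)" for d \<kappa>
  define V where "V = PiE {..<m} (\<lambda>j. {lo j, hi j})"
  define Dm where "Dm v = mat m m (\<lambda>(i,j). if i = j then v i else (0::real))" for v
  define S where "S \<kappa> = (\<lambda>D. det (- Jmat B C J2 J4 D \<kappa>)) ` diag_set m lo hi" for \<kappa>
  have Jv: "Jmat B C J2 J4 D \<kappa> = Jfam (rB * D * rC) J2 J4 \<kappa>" for D \<kappa>
    unfolding Jmat_def Jfam_def rB_def rC_def ..
  have Dset: "D \<in> carrier_mat m m" "diagonal_mat D" "\<forall>j<m. lo j \<le> D $$ (j,j) \<and> D $$ (j,j) \<le> hi j"
    if "D \<in> diag_set m lo hi" for D using that unfolding diag_set_def by auto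
  have SD: "det (- Jmat B C J2 J4 D \<kappa>) = Phi (\<lambda>j. D $$ (j,j)) \<kappa>" if "D \<in> diag_set m lo hi" for D \<kappa>
    unfolding Jv Phi_def BDC_Md[OF rB rC Dset(1,2)[OF that]] ..
  have Dm_in: "Dm v \<in> diag_set m lo hi" if "v \<in> V" for v
  proof -
    have "v j \<in> {lo j, hi j}" if "j < m" for j using \<open>v \<in> V\<close> that unfolding V_def by (auto simp: PiE_mem)
    hence "lo j \<le> v j \<and> v j \<le> hi j" if "j < m" for j using lohi that by fastforce
    thus ?thesis unfolding diag_set_def Dm_def diagonal_mat_def by auto
  qed
  have PhiDm: "det (- Jmat B C J2 J4 (Dm v) \<kappa>) = Phi v \<kappa>" if "v \<in> V" for v \<kappa>
  proof -
    have e1: "det (- Jmat B C J2 J4 (Dm v) \<kappa>) = Phi (\<lambda>j. Dm v $$ (j,j)) \<kappa>" by (rule SD[OF Dm_in[OF that]])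
    have "Md n m rB rC (\<lambda>j. Dm v $$ (j,j)) = Md n m rB rC v" by (rule Md_loc) (auto simp: Dm_def)
    thus ?thesis using e1 unfolding Phi_def by simp
  qed
  have aff: "\<exists>\<alpha> \<beta>. \<forall>x. Phi (d(j:=x)) \<kappa> = \<alpha> + x * \<beta>" if "j < m" for d j \<kappa>
    unfolding Phi_def by (rule Md_affine[OF J2 J4 that])
  have loc: "Phi d \<kappa> = Phi d' \<kappa>" if "\<forall>j<m. d j = d' j" for d d' \<kappa>
    unfolding Phi_def using Md_loc[OF that] by simp
  have finV: "finite V" unfolding V_def by (rule finite_PiE) auto
  have neV: "V \<noteq> {}" unfolding V_def by (simp add: PiE_eq_empty_iff)
  have up: "\<exists>v\<in>V. Phi v \<kappa> \<ge> det (- Jmat B C J2 J4 D \<kappa>)" if "D \<in> diag_set m lo hi" for D \<kappa>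
    unfolding SD[OF that] V_def by (rule vertex_max[OF aff loc Dset(3)[OF that]])
  have lowr: "\<exists>v\<in>V. Phi v \<kappa> \<le> det (- Jmat B C J2 J4 D \<kappa>)" if "D \<in> diag_set m lo hi" for D \<kappa>
    unfolding SD[OF that] V_def by (rule vertex_min[OF aff loc Dset(3)[OF that]])
  have bdd_a: "bdd_above (S \<kappa>)" for \<kappa>
  proof (rule bdd_aboveI)
    fix x assume "x \<in> S \<kappa>"
    then obtain D where D: "D \<in> diag_set m lo hi" "x = det (- Jmat B C J2 J4 D \<kappa>)" unfolding S_def by auto
    from up[OF D(1)] obtain v where "v \<in> V" "Phi v \<kappa> \<ge> x" using D(2) by auto
    moreover have "Phi v \<kappa> \<le> Max ((\<lambda>v. Phi v \<kappa>) ` V)" using finV \<open>v \<in> V\<close> by auto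
    ultimately show "x \<le> Max ((\<lambda>v. Phi v \<kappa>) ` V)" by simp
  qed
  have bdd_b: "bdd_below (S \<kappa>)" for \<kappa>
  proof (rule bdd_belowI)
    fix x assume "x \<in> S \<kappa>"
    then obtain D where D: "D \<in> diag_set m lo hi" "x = det (- Jmat B C J2 J4 D \<kappa>)" unfolding S_def by auto
    from lowr[OF D(1)] obtain v where "v \<in> V" "Phi v \<kappa> \<le> x" using D(2) by auto
    moreover have "Min ((\<lambda>v. Phi v \<kappa>) ` V) \<le> Phi v \<kappa>" using finV \<open>v \<in> V\<close> by auto
    ultimately show "Min ((\<lambda>v. Phi v \<kappa>) ` V) \<le> x" by simp
  qed
  have neS: "S \<kappa> \<noteq> {}" for \<kappa> unfolding S_def using neV Dm_in by blast
  have MS: "\<exists>D\<in>diag_set m lo hi. microphase_sep (\<lambda>\<kappa>. spectral_abscissa (Jmat B C J2 J4 D \<kappa>))"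
    if D: "D \<in> diag_set m lo hi" and e: "e > 0"
      and init: "\<And>\<kappa>. 0 < \<kappa> \<Longrightarrow> \<kappa> < e \<Longrightarrow> det (- Jmat B C J2 J4 D \<kappa>) > 0"
      and k2: "k2 > 0" and neg: "det (- Jmat B C J2 J4 D k2) < 0" for D e k2
  proof -
    have M: "rB * D * rC \<in> carrier_mat n n" using rB rC Dset(1)[OF D] by simp
    have A1: "det (rB * D * rC) = 0" "num_neg_eigs (rB * D * rC) = n - 1"
      using A1a D unfolding rB_def rC_def by auto
    have "microphase_sep (\<lambda>\<kappa>. spectral_abscissa (Jfam (rB * D * rC) J2 J4 \<kappa>))"
      by (rule MS_of[OF M J2 J4 n A1 nsd nd e _ k2], insert init neg, unfold Jv, auto)
    thus ?thesis using D unfolding Jv by blast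
  qed
  from hyp have "(initially_positive (\<lambda>\<kappa>. Inf (S \<kappa>)) \<and> neg_sign_change (\<lambda>\<kappa>. Inf (S \<kappa>))) \<or>
      (initially_positive (\<lambda>\<kappa>. Sup (S \<kappa>)) \<and> neg_sign_change (\<lambda>\<kappa>. Sup (S \<kappa>)))"
    unfolding S_def Let_def .
  thus ?thesis
  proof
    assume a: "initially_positive (\<lambda>\<kappa>. Inf (S \<kappa>)) \<and> neg_sign_change (\<lambda>\<kappa>. Inf (S \<kappa>))"
    then obtain k0 where k0: "k0 > 0" "\<And>\<kappa>. 0 < \<kappa> \<Longrightarrow> \<kappa> < k0 \<Longrightarrow> Inf (S \<kappa>) > 0"
      unfolding initially_positive_def by auto
    from a obtain \<kappa>1 \<kappa>2 where k12: "0 \<le> \<kappa>1" "\<kappa>1 < \<kappa>2" "Inf (S \<kappa>2) < 0"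
      unfolding neg_sign_change_def by auto
    from cInf_lessD[OF neS k12(3)] obtain D where D: "D \<in> diag_set m lo hi" "det (- Jmat B C J2 J4 D \<kappa>2) < 0"
      unfolding S_def by auto
    have init: "det (- Jmat B C J2 J4 D \<kappa>) > 0" if "0 < \<kappa>" "\<kappa> < k0" for \<kappa>
    proof -
      have "Inf (S \<kappa>) \<le> det (- Jmat B C J2 J4 D \<kappa>)"
        by (rule cInf_lower[OF _ bdd_b], insert D(1), auto simp: S_def)
      thus ?thesis using k0(2)[OF that] by simp
    qed
    show ?thesis by (rule MS[OF D(1) k0(1) init _ D(2)], insert k12, auto)
  next
    assume a: "initially_positive (\<lambda>\<kappa>. Sup (S \<kappa>)) \<and> neg_sign_change (\<lambda>\<kappa>. Sup (S \<kappa>))"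
    then obtain k0 where k0: "k0 > 0" "\<And>\<kappa>. 0 < \<kappa> \<Longrightarrow> \<kappa> < k0 \<Longrightarrow> Sup (S \<kappa>) > 0"
      unfolding initially_positive_def by auto
    from a obtain \<kappa>1 \<kappa>2 where k12: "0 \<le> \<kappa>1" "\<kappa>1 < \<kappa>2" "Sup (S \<kappa>2) < 0"
      unfolding neg_sign_change_def by auto
    have vpos: "\<exists>v\<in>V. Phi v \<kappa> > 0" if "0 < \<kappa>" "\<kappa> < k0" for \<kappa>
    proof -
      from less_cSupD[OF neS k0(2)[OF that]] obtain D where D: "D \<in> diag_set m lo hi" "det (- Jmat B C J2 J4 D \<kappa>) > 0"
        unfolding S_def by auto
      from up[OF D(1), of \<kappa>] obtain v where "v \<in> V" "Phi v \<kappa> \<ge> det (- Jmat B C J2 J4 D \<kappa>)" by blast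
      with D(2) show ?thesis by (intro bexI[of _ v]) auto
    qed
    have polyv: "\<exists>q. \<forall>\<kappa>. Phi v \<kappa> = poly q \<kappa>" for v
      unfolding Phi_def by (rule det_Jfam_poly[OF Md_carrier J2 J4])
    have "\<exists>v\<in>V. \<exists>\<epsilon>>0. \<forall>\<kappa>. 0 < \<kappa> \<and> \<kappa> < \<epsilon> \<longrightarrow> Phi v \<kappa> > 0"
    proof (rule ccontr)
      assume "\<not> ?thesis"
      hence "\<forall>v\<in>V. \<exists>\<epsilon>>0. \<forall>\<kappa>. 0 < \<kappa> \<and> \<kappa> < \<epsilon> \<longrightarrow> Phi v \<kappa> \<le> 0"
        using poly_sign_near0 polyv by metis
      then obtain ep where ep: "\<And>v. v \<in> V \<Longrightarrow> ep v > 0"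
        "\<And>v \<kappa>. v \<in> V \<Longrightarrow> 0 < \<kappa> \<Longrightarrow> \<kappa> < ep v \<Longrightarrow> Phi v \<kappa> \<le> 0" by metis
      define \<epsilon> where "\<epsilon> = min k0 (Min (ep ` V))"
      have epos: "\<epsilon> > 0" unfolding \<epsilon>_def using finV neV ep(1) k0(1) by auto
      have "\<epsilon>/2 < k0" using epos unfolding \<epsilon>_def by linarith
      from vpos[OF _ this] epos obtain v where v: "v \<in> V" "Phi v (\<epsilon>/2) > 0" by auto
      have "Min (ep ` V) \<le> ep v" using finV v(1) by auto
      hence "\<epsilon>/2 < ep v" using epos unfolding \<epsilon>_def by linarith
      from ep(2)[OF v(1) _ this] epos v(2) show False by simp
    qed
    then obtain v \<epsilon> where v: "v \<in> V" "\<epsilon> > 0" "\<And>\<kappa>. 0 < \<kappa> \<Longrightarrow> \<kappa> < \<epsilon> \<Longrightarrow> Phi v \<kappa> > 0" by blast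
    have "det (- Jmat B C J2 J4 (Dm v) \<kappa>2) \<le> Sup (S \<kappa>2)"
      by (rule cSup_upper[OF _ bdd_a], insert Dm_in[OF v(1)], auto simp: S_def)
    with k12(3) have neg: "det (- Jmat B C J2 J4 (Dm v) \<kappa>2) < 0" by simp
    show ?thesis by (rule MS[OF Dm_in[OF v(1)] v(2) _ _ neg], insert v(3) PhiDm[OF v(1)] k12, auto)
  qed
qed


end
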